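(* Run ANSGD with $(\gamma_t)$ positive and monotonically non-increasing and with stepsizes $\eta_t=\frac{\alpha_t}{\mu+\theta_t}$, and assume $\mu+\theta_t-\alpha_t\mathbb{E}L_{t+1}>0$ for all $t$. Then for every fixed $\mathbf{x}\in\mathbb{R}^D$ and every $t\geq 0$, $$\mathbb{E}\Delta_{t+1} \leq (1-\alpha_t)\mathbb{E}\Delta_t + \alpha_t\theta_t D_t^2-\alpha_t(\mu+\theta_t) D_{t+1}^2 + \frac{\alpha_t}{2(\mu+\theta_t-\alpha_t\mathbb{E}L_{t+1})}\sigma^2 + (1-\alpha_t)(\gamma_t-\gamma_{t+1})D_{\mathcal{U}}.$$
   Context: Setting: $\|\cdot\|$ is the Euclidean norm; $\boldsymbol{\xi}$ is a random vector with distribution $P$. Objective $\Phi(\mathbf{x})=f(\mathbf{x})+g(\mathbf{x})$ on $\mathbb{R}^D$ with $f(\mathbf{x})=\mathbb{E}_{\boldsymbol{\xi}}f(\mathbf{x},\boldsymbol{\xi})$, $g(\mathbf{x})=\mathbb{E}_{\boldsymbol{\xi}}g(\mathbf{x},\boldsymbol{\xi})$. Each $g(\cdot,\boldsymbol{\xi})$ is differentiable; $g$ is convex, $L_g$-Lipschitz smooth ($g(\mathbf{x})\le g(\mathbf{y})+\langle\nabla g(\mathbf{y}),\mathbf{x}-\mathbf{y}\rangle+\frac{L_g}{2}\|\mathbf{x}-\mathbf{y}\|^2$) and $\mu$-strongly convex for some $\mu\ge0$ ($g(\mathbf{x})\ge g(\mathbf{y})+\langle\nabla g(\mathbf{y}),\mathbf{x}-\mathbf{y}\rangle+\frac{\mu}{2}\|\mathbf{x}-\mathbf{y}\|^2$).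 The loss has the form $f(\mathbf{x},\boldsymbol{\xi})=\max_{\mathbf{u}\in\mathcal{U}}[\langle A_{\boldsymbol{\xi}}\mathbf{x},\mathbf{u}\rangle-Q(\mathbf{u})]$ with $\mathcal{U}\subseteq\mathbb{R}^m$ convex, $Q$ continuous convex, $A_{\boldsymbol{\xi}}:\mathbb{R}^D\to\mathbb{R}^m$ linear with operator norm $\|A\|:=\max\{\langle A\mathbf{x},\mathbf{u}\rangle:\|\mathbf{x}\|=\|\mathbf{u}\|=1\}$. Let $\omega:\mathcal{U}\to[0,\infty)$ be $\zeta$-strongly convex, $D_{\mathcal{U}}:=\max_{\mathcal{U}}\omega<\infty$, and for $\gamma>0$, $\hat{f}(\mathbf{x},\boldsymbol{\xi},\gamma):=\max_{\mathbf{u}\in\mathcal{U}}[\langle A_{\boldsymbol{\xi}}\mathbf{x},\mathbf{u}\rangle-Q(\mathbf{u})-\gamma\omega(\mathbf{u})]$. Algorithm ANSGD: given sequences $\gamma_t>0$, $\eta_t\ge0$, $\theta_t\ge0$, $0\le\alpha_t\le1$, i.i.d. samples $\boldsymbol{\xi}_1,\boldsymbol{\xi}_2,\ldots\sim P$ and initial points $\mathbf{x}_0,\mathbf{v}_0$, for $t=0,1,2,\ldots$: (1) $\mathbf{y}_t=\frac{(1-\alpha_t)(\mu+\theta_t)\mathbf{x}_t+\alpha_t\theta_t\mathbf{v}_t}{\mu(1-\alpha_t)+\theta_t}$; (2) set $\hat{f}_{t+1}(\cdot):=\hat{f}(\cdot,\boldsymbol{\xi}_{t+1},\gamma_{t+1})$,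 $g_{t+1}(\cdot):=g(\cdot,\boldsymbol{\xi}_{t+1})$; (3) $\mathbf{x}_{t+1}=\mathbf{y}_t-\eta_t[\nabla\hat{f}_{t+1}(\mathbf{y}_t)+\nabla g_{t+1}(\mathbf{y}_t)]$; (4) $\mathbf{v}_{t+1}=\frac{\theta_t\mathbf{v}_t+\mu\mathbf{y}_t-[\nabla\hat{f}_{t+1}(\mathbf{y}_t)+\nabla g_{t+1}(\mathbf{y}_t)]}{\mu+\theta_t}$. Notation: $\mathbb{E}$ is expectation over all samples; $F(\mathbf{z},\gamma):=\mathbb{E}_{\boldsymbol{\xi}}[\hat{f}(\mathbf{z},\boldsymbol{\xi},\gamma)+g(\mathbf{z},\boldsymbol{\xi})]$ (fresh sample, $\mathbf{z}$ fixed); $L_t:=L_g+\frac{\|A_{\boldsymbol{\xi}_t}\|^2}{\gamma_t\zeta}$; $\sigma_t(\mathbf{z}):=[\nabla\hat{f}_t(\mathbf{z})+\nabla g_t(\mathbf{z})]-\nabla_{\mathbf{z}}F(\mathbf{z},\gamma_t)$; $\sigma^2:=\mathbb{E}\max_t\|\sigma_{t+1}(\mathbf{y}_t)\|^2$; for a fixed comparator $\mathbf{x}$, $\Delta_t:=F(\mathbf{x}_t,\gamma_t)-F(\mathbf{x},\gamma_t)$ and $D_t^2:=\frac12\mathbb{E}\|\mathbf{x}-\mathbf{v}_t\|^2$. *)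

theory Defs
  imports "HOL-Analysis.Analysis" "HOL-Probability.Probability"
begin

definition grad :: "('a::real_inner \<Rightarrow> real) \<Rightarrow> 'a \<Rightarrow> 'a" where
  "grad h z = (SOME v. GDERIV h z :> v)"

definition strongly_convex_on :: "'a::real_normed_vector set \<Rightarrow> ('a \<Rightarrow> real) \<Rightarrow> real \<Rightarrow> bool" where
  "strongly_convex_on S h c \<longleftrightarrow>
     (\<forall>x\<in>S. \<forall>y\<in>S. \<forall>t::real. 0 \<le> t \<and> t \<le> 1 \<longrightarrow>
        h ((1 - t) *\<^sub>R x + t *\<^sub>R y) \<le> (1 - t) * h x + t * h y - c / 2 * t * (1 - t) * (norm (x - y))\<^sup>2)"

definition opnorm :: "('a::real_inner \<Rightarrow> 'b::real_inner) \<Rightarrow> real" where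
  "opnorm A = Sup {inner (A x) u | x u. norm x = 1 \<and> norm u = 1}"

definition fhat :: "('b \<Rightarrow> 'd \<Rightarrow> 'm::real_inner) \<Rightarrow> 'm set \<Rightarrow> ('m \<Rightarrow> real) \<Rightarrow> ('m \<Rightarrow> real)
                     \<Rightarrow> real \<Rightarrow> 'd \<Rightarrow> 'b \<Rightarrow> real" where
  "fhat A U Q om \<gamma> z s = Sup ((\<lambda>u. inner (A s z) u - Q u - \<gamma> * om u) ` U)"

(* ANSGD iterates (x_t, v_t) along one sample path.  G t y is the stochastic gradient
   grad fhat_{t+1}(y) + grad g_{t+1}(y) at the point y (it depends on the sample xi_{t+1}). *)
definition ansgd_y :: "real \<Rightarrow> real \<Rightarrow> real \<Rightarrow> 'd::real_vector \<Rightarrow> 'd \<Rightarrow> 'd" where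
  "ansgd_y \<mu> \<alpha> \<theta> x v =
     (1 / (\<mu> * (1 - \<alpha>) + \<theta>)) *\<^sub>R ((1 - \<alpha>) * (\<mu> + \<theta>)) *\<^sub>R x + (1 / (\<mu> * (1 - \<alpha>) + \<theta>)) *\<^sub>R (\<alpha> * \<theta>) *\<^sub>R v"

primrec ansgd :: "real \<Rightarrow> (nat \<Rightarrow> real) \<Rightarrow> (nat \<Rightarrow> real) \<Rightarrow> (nat \<Rightarrow> real)
                  \<Rightarrow> (nat \<Rightarrow> 'd \<Rightarrow> 'd) \<Rightarrow> 'd \<Rightarrow> 'd \<Rightarrow> nat \<Rightarrow> 'd::real_vector \<times> 'd" where
  "ansgd \<mu> \<alpha> \<theta> \<eta> G x0 v0 0 = (x0, v0)"
| "ansgd \<mu> \<alpha> \<theta> \<eta> G x0 v0 (Suc t) =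
     (let x = fst (ansgd \<mu> \<alpha> \<theta> \<eta> G x0 v0 t); v = snd (ansgd \<mu> \<alpha> \<theta> \<eta> G x0 v0 t);
          y = ansgd_y \<mu> (\<alpha> t) (\<theta> t) x v; gr = G t y
      in (y - \<eta> t *\<^sub>R gr, (1 / (\<mu> + \<theta> t)) *\<^sub>R (\<theta> t *\<^sub>R v + \<mu> *\<^sub>R y - gr)))"


definition Fobj :: "'b measure \<Rightarrow> ('b \<Rightarrow> 'd \<Rightarrow> 'm::real_inner) \<Rightarrow> 'm set \<Rightarrow> ('m \<Rightarrow> real) \<Rightarrow> ('m \<Rightarrow> real)
                    \<Rightarrow> ('d \<Rightarrow> 'b \<Rightarrow> real) \<Rightarrow> 'd \<Rightarrow> real \<Rightarrow> real" where
  "Fobj P A U Q om g z c = (\<integral>s. fhat A U Q om c z s + g z s \<partial>P)"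

definition sgrad :: "('b \<Rightarrow> 'd::real_inner \<Rightarrow> 'm::real_inner) \<Rightarrow> 'm set \<Rightarrow> ('m \<Rightarrow> real) \<Rightarrow> ('m \<Rightarrow> real)
                    \<Rightarrow> ('d \<Rightarrow> 'b \<Rightarrow> real) \<Rightarrow> (nat \<Rightarrow> real) \<Rightarrow> (nat \<Rightarrow> 'w \<Rightarrow> 'b) \<Rightarrow> 'w \<Rightarrow> nat \<Rightarrow> 'd \<Rightarrow> 'd" where
  "sgrad A U Q om g \<gamma> \<xi> \<omega> k y =
     grad (\<lambda>z. fhat A U Q om (\<gamma> (Suc k)) z (\<xi> (Suc k) \<omega>)) y + grad (\<lambda>z. g z (\<xi> (Suc k) \<omega>)) y"

end

theory Submission imports Defs begin


lemma scD:
  assumes "strongly_convex_on U h c" "x \<in> U" "y \<in> U" "0 \<le> t" "t \<le> 1"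
  shows "h ((1 - t) *\<^sub>R x + t *\<^sub>R y) \<le> (1 - t) * h x + t * h y - c / 2 * t * (1 - t) * (norm (x - y))\<^sup>2"
  using assms unfolding strongly_convex_on_def by blast

lemma U_bounded:
  fixes U :: "'m::euclidean_space set" and om :: "'m \<Rightarrow> real"
  assumes cv: "convex U" and ne: "U \<noteq> {}" and nn: "\<And>u. u \<in> U \<Longrightarrow> 0 \<le> om u" and z: "\<zeta> > 0"
    and sc: "strongly_convex_on U om \<zeta>" and bd: "bdd_above (om ` U)"
  shows "\<exists>R. \<forall>u\<in>U. norm u \<le> R"
proof -
  obtain u0 where u0: "u0 \<in> U" using ne by auto
  define D where "D = Sup (om ` U)"
  have omD: "om u \<le> D" if "u \<in> U" for u using that bd unfolding D_def by (intro cSup_upper) auto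
  have "norm (u - u0) \<le> sqrt (8 * D / \<zeta>)" if u: "u \<in> U" for u
  proof -
    have "om ((1 - 1/2) *\<^sub>R u + (1/2) *\<^sub>R u0) \<le> (1 - 1/2) * om u + 1/2 * om u0 - \<zeta> / 2 * (1/2) * (1 - 1/2) * (norm (u - u0))\<^sup>2"
      by (rule scD[OF sc u u0]) auto
    moreover have "0 \<le> om ((1 - 1/2) *\<^sub>R u + (1/2) *\<^sub>R u0)"
    proof (rule nn)
      show "(1 - 1/2) *\<^sub>R u + (1/2) *\<^sub>R u0 \<in> U" using cv u u0 by (intro convexD) auto
    qed
    ultimately have "\<zeta> / 8 * (norm (u - u0))\<^sup>2 \<le> D" using omD[OF u] omD[OF u0] by simp
    then have "(norm (u - u0))\<^sup>2 \<le> 8 * D / \<zeta>" using z by (simp add: field_simps)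
    then show ?thesis by (simp add: real_le_rsqrt)
  qed
  then have "norm u \<le> norm u0 + sqrt (8 * D / \<zeta>)" if "u \<in> U" for u
    using that norm_triangle_sub[of u u0] by fastforce
  then show ?thesis by blast
qed

lemma Q_bdd_below:
  fixes U :: "'m::euclidean_space set" and Q :: "'m \<Rightarrow> real"
  assumes cv: "convex U" and ne: "U \<noteq> {}" and Qc: "continuous_on U Q" and Qv: "convex_on U Q"
    and R: "\<forall>u\<in>U. norm u \<le> R"
  shows "\<exists>B. \<forall>u\<in>U. B \<le> Q u"
proof -
  obtain a where a: "a \<in> rel_interior U" using rel_interior_eq_empty[OF cv] ne by blast
  then obtain e where aU: "a \<in> U" and e: "e > 0" and eb: "ball a e \<inter> affine hull U \<subseteq> U"
    unfolding mem_rel_interior_ball by blast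
  obtain d where d: "d > 0" and dd: "\<And>u. u \<in> U \<Longrightarrow> dist u a < d \<Longrightarrow> dist (Q u) (Q a) < 1"
    using Qc aU unfolding continuous_on_iff by (meson zero_less_one)
  have R0: "0 \<le> R" using R aU norm_ge_zero order_trans by blast
  define s where "s = min e d / (2 * (2 * R + 1))"
  have s0: "s > 0" using e d R0 by (simp add: s_def)
  have "Q a - 1 / s \<le> Q u" if u: "u \<in> U" for u
  proof -
    define b where "b = (1 + s) *\<^sub>R a + (- s) *\<^sub>R u"
    have baff: "b \<in> affine hull U"
      unfolding b_def by (rule mem_affine) (use aU u hull_subset[of U affine] in auto)
    have nb: "norm (b - a) = s * norm (a - u)"
    proof -
      have "b - a = s *\<^sub>R (a - u)" by (simp add: b_def algebra_simps)
      then show ?thesis using s0 by simp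
    qed
    have "norm (a - u) \<le> 2 * R" using R aU u norm_triangle_ineq4[of a u] by (smt (verit))
    then have "s * norm (a - u) \<le> s * (2 * R)" using s0 by (intro mult_left_mono) auto
    also have "\<dots> < min e d"
    proof -
      have "s * (2 * R) < s * (2 * (2 * R + 1))" using s0 R0 by simp
      also have "\<dots> = min e d" using R0 by (simp add: s_def)
      finally show ?thesis .
    qed
    finally have bd: "dist b a < min e d" using nb by (simp add: dist_norm)
    have bU: "b \<in> U" using eb baff bd by (auto simp: dist_commute)
    have Qb: "Q b < Q a + 1" using dd[OF bU] bd by (auto simp: dist_real_def)
    define t where "t = s / (1 + s)"
    have t0: "0 \<le> t" "t \<le> 1" "t > 0" using s0 by (auto simp: t_def)
    have "(1 - t) *\<^sub>R b + t *\<^sub>R u = a"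
      using s0 by (simp add: t_def b_def algebra_simps divide_simps scaleR_left_distrib[symmetric])
    then have "Q a \<le> (1 - t) * Q b + t * Q u" using convex_onD[OF Qv t0(1,2) bU u] by simp
    also have "\<dots> \<le> (1 - t) * (Q a + 1) + t * Q u" using Qb t0 by (intro add_right_mono mult_left_mono) auto
    finally have "t * Q a - (1 - t) \<le> t * Q u" by (simp add: algebra_simps)
    then have "Q a - (1 - t) / t \<le> Q u" using t0 by (simp add: field_simps)
    moreover have "(1 - t) / t = 1 / s" using s0 by (simp add: t_def field_simps)
    ultimately show ?thesis by simp
  qed
  then show ?thesis by blast
qed

lemma le_by_small:
  fixes a b k :: real
  assumes "\<And>t. 0 < t \<Longrightarrow> t < 1 \<Longrightarrow> a \<le> b + t * k" and "0 \<le> k"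
  shows "a \<le> b"
proof (rule ccontr)
  assume "\<not> a \<le> b"
  then have dl: "a - b > 0" by simp
  define t where "t = min (1/2) ((a - b) / (2 * (k + 1)))"
  have t: "0 < t" "t < 1" using dl assms(2) by (auto simp: t_def)
  have "t * k \<le> (a - b) / (2 * (k + 1)) * k" using assms(2) by (intro mult_right_mono) (auto simp: t_def)
  also have "\<dots> = (a - b) * (k / (2 * (k + 1)))" by simp
  also have "\<dots> < (a - b) * 1"
    using dl assms(2) by (intro mult_strict_left_mono) (auto simp: field_simps)
  also have "\<dots> = a - b" by simp
  finally show False using assms(1)[OF t] by simp
qed

lemma young_inner:
  fixes d e :: "'a::real_inner"
  assumes c: "c > 0"
  shows "inner d e \<le> c / 2 * (norm e)\<^sup>2 + (norm d)\<^sup>2 / (2 * c)"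
proof -
  have "0 \<le> (norm (c *\<^sub>R e - d))\<^sup>2" by simp
  also have "\<dots> = inner (c *\<^sub>R e - d) (c *\<^sub>R e - d)" by (simp add: power2_norm_eq_inner)
  also have "\<dots> = c * c * inner e e - 2 * c * inner d e + inner d d"
    by (simp add: inner_diff_left inner_diff_right inner_commute[of e d] algebra_simps)
  also have "\<dots> = c\<^sup>2 * (norm e)\<^sup>2 - 2 * c * inner d e + (norm d)\<^sup>2"
    by (simp add: dot_square_norm power2_eq_square)
  finally have "2 * c * inner d e \<le> c\<^sup>2 * (norm e)\<^sup>2 + (norm d)\<^sup>2" by simp
  then show ?thesis using c by (simp add: field_simps power2_eq_square)
qed

lemma conj_key:
  fixes U :: "'m::euclidean_space set" and Q om :: "'m \<Rightarrow> real"
  assumes cv: "convex U" and ne: "U \<noteq> {}" and Qv: "convex_on U Q"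
    and sc: "strongly_convex_on U om \<zeta>" and z: "\<zeta> > 0" and g: "\<gamma> > 0"
    and R: "\<forall>u\<in>U. norm u \<le> R" and B: "\<forall>u\<in>U. B \<le> Q u" and nn: "\<forall>u\<in>U. 0 \<le> om u"
  defines "\<phi> \<equiv> \<lambda>w. Sup ((\<lambda>u. inner w u - Q u - \<gamma> * om u) ` U)"
  shows "\<exists>u. norm u \<le> R \<and> (\<forall>w'. \<phi> w + inner (w' - w) u \<le> \<phi> w')
            \<and> (\<forall>w'. \<phi> w' \<le> \<phi> w + inner (w' - w) u + (norm (w' - w))\<^sup>2 / (2 * (\<gamma> * \<zeta>)))"
proof -
  define c where "c = \<gamma> * \<zeta>"
  have c: "c > 0" using z g by (simp add: c_def)
  define val where "val w u = inner w u - Q u - \<gamma> * om u" for w u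
  have phi: "\<phi> w = Sup (val w ` U)" for w by (simp add: \<phi>_def val_def)
  have R0: "0 \<le> R" using R ne norm_ge_zero order_trans by blast
  have bdd: "bdd_above (val w ` U)" for w
  proof (rule bdd_aboveI2)
    fix u assume u: "u \<in> U"
    have "inner w u \<le> norm w * R"
      using Cauchy_Schwarz_ineq2[of w u] R u by (smt (verit) mult_left_mono norm_ge_zero)
    then show "val w u \<le> norm w * R - B" using B nn u g unfolding val_def
      by (smt (verit) mult_nonneg_nonneg)
  qed
  have le_phi: "val w u \<le> \<phi> w" if "u \<in> U" for w u
    unfolding phi using that bdd by (intro cSup_upper) auto
  have conc: "(1 - t) * val w x + t * val w y + c / 2 * t * (1 - t) * (norm (x - y))\<^sup>2
               \<le> val w ((1 - t) *\<^sub>R x + t *\<^sub>R y)"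
    if x: "x \<in> U" and y: "y \<in> U" and t: "0 \<le> t" "t \<le> 1" for w x y t
  proof -
    have i: "inner w ((1 - t) *\<^sub>R x + t *\<^sub>R y) = (1 - t) * inner w x + t * inner w y"
      by (simp add: inner_add_right)
    have q: "Q ((1 - t) *\<^sub>R x + t *\<^sub>R y) \<le> (1 - t) * Q x + t * Q y" using convex_onD[OF Qv t x y] .
    have o: "om ((1 - t) *\<^sub>R x + t *\<^sub>R y) \<le> (1 - t) * om x + t * om y - \<zeta> / 2 * t * (1 - t) * (norm (x - y))\<^sup>2"
      using scD[OF sc x y t] .
    have o': "\<gamma> * om ((1 - t) *\<^sub>R x + t *\<^sub>R y) \<le> \<gamma> * ((1 - t) * om x + t * om y - \<zeta> / 2 * t * (1 - t) * (norm (x - y))\<^sup>2)"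
      using mult_left_mono[OF o] g by simp
    show ?thesis unfolding val_def i c_def using q o' by (simp add: algebra_simps)
  qed
  have mid: "(1 - 1/2) *\<^sub>R x + (1/2) *\<^sub>R y \<in> U" if "x \<in> U" "y \<in> U" for x y :: 'm
    using cv that by (intro convexD) auto
  have close: "(norm (x - y))\<^sup>2 \<le> 8 * e / c"
    if x: "x \<in> U" and y: "y \<in> U" and vx: "\<phi> w - e \<le> val w x" and vy: "\<phi> w - e \<le> val w y" for x y e
  proof -
    have "(1 - 1/2) * val w x + 1/2 * val w y + c / 2 * (1/2) * (1 - 1/2) * (norm (x - y))\<^sup>2
           \<le> \<phi> w" using conc[OF x y, of "1/2" w] le_phi[OF mid[OF x y], of w] by simp
    then show ?thesis using vx vy c by (simp add: field_simps)
  qed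
  define ep :: "nat \<Rightarrow> real" where "ep n = inverse (real (Suc n))" for n
  have ep0: "ep \<longlonglongrightarrow> 0" unfolding ep_def by (rule LIMSEQ_inverse_real_of_nat)
  have ep_pos: "ep n > 0" for n by (simp add: ep_def)
  have "\<exists>u\<in>U. \<phi> w - ep n < val w u" for n
  proof -
    have "\<phi> w - ep n < Sup (val w ` U)" using ep_pos[of n] phi[of w] by simp
    then show ?thesis using less_cSup_iff[of "val w ` U"] bdd ne by auto
  qed
  then obtain u where uU: "\<And>n. u n \<in> U" and uv: "\<And>n. \<phi> w - ep n < val w (u n)" by metis
  have epmono: "ep n \<le> ep m" if "m \<le> n" for m n using that by (simp add: ep_def field_simps)
  have "Cauchy u"
  proof (rule CauchyI)
    fix e :: real assume e: "e > 0"
    obtain N :: nat where N: "8 / (c * e\<^sup>2) < real N" using reals_Archimedean2 by blast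
    have "norm (u m - u n) < e" if m: "m \<ge> N" and n: "n \<ge> N" for m n
    proof -
      have "(norm (u m - u n))\<^sup>2 \<le> 8 * ep N / c"
        using close[OF uU uU, of "ep N" m n] uv[of m] uv[of n] epmono[OF m] epmono[OF n] by fastforce
      also have "\<dots> < e\<^sup>2"
      proof -
        have "8 / (c * e\<^sup>2) < real (Suc N)" using N by simp
        then have "8 < real (Suc N) * (c * e\<^sup>2)" using c e by (simp add: field_simps)
        have pos: "c * real (Suc N) > 0" using c by simp
        have "8 / (c * real (Suc N)) < e\<^sup>2" using pos \<open>8 < real (Suc N) * (c * e\<^sup>2)\<close>
          by (simp add: pos_divide_less_eq mult.commute mult.left_commute)
        then show ?thesis using c by (simp add: ep_def divide_inverse mult.commute)
      qed
      finally show ?thesis using e by (smt (verit) norm_ge_zero power_mono)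
    qed
    then show "\<exists>M. \<forall>m\<ge>M. \<forall>n\<ge>M. norm (u m - u n) < e" by blast
  qed
  then obtain us where us: "u \<longlonglongrightarrow> us" using Cauchy_convergent_iff convergent_def by blast
  have nus: "norm us \<le> R"
    by (rule LIMSEQ_le_const2[OF tendsto_norm[OF us]]) (use R uU in auto)
  have growth: "val w v \<le> \<phi> w - c / 2 * (norm (us - v))\<^sup>2" if v: "v \<in> U" for v
  proof (rule le_by_small[where k = "c / 2 * (norm (us - v))\<^sup>2"])
    fix t :: real assume t: "0 < t" "t < 1"
    have each: "val w v \<le> \<phi> w + (1 - t) / t * ep n - c / 2 * (1 - t) * (norm (u n - v))\<^sup>2" for n
    proof -
      have "(1 - t) * val w (u n) + t * val w v + c / 2 * t * (1 - t) * (norm (u n - v))\<^sup>2 \<le> \<phi> w"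
        using conc[OF uU v, of t w n] le_phi[of "(1 - t) *\<^sub>R u n + t *\<^sub>R v" w] convexD[OF cv uU v, of "1 - t" t n] t
        by simp
      moreover have "(1 - t) * (\<phi> w - ep n) \<le> (1 - t) * val w (u n)"
        using uv[of n] t by (intro mult_left_mono) auto
      ultimately have "t * val w v \<le> t * \<phi> w + (1 - t) * ep n - c / 2 * t * (1 - t) * (norm (u n - v))\<^sup>2"
        by (simp add: algebra_simps)
      then show ?thesis using t by (simp add: field_simps)
    qed
    have lim: "(\<lambda>n. \<phi> w + (1 - t) / t * ep n - c / 2 * (1 - t) * (norm (u n - v))\<^sup>2)
                 \<longlonglongrightarrow> \<phi> w + (1 - t) / t * 0 - c / 2 * (1 - t) * (norm (us - v))\<^sup>2"
      by (intro tendsto_intros ep0 us)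
    have "val w v \<le> \<phi> w + (1 - t) / t * 0 - c / 2 * (1 - t) * (norm (us - v))\<^sup>2"
      by (rule LIMSEQ_le_const[OF lim]) (use each in auto)
    then show "val w v \<le> \<phi> w - c / 2 * (norm (us - v))\<^sup>2 + t * (c / 2 * (norm (us - v))\<^sup>2)"
      by (simp add: algebra_simps add_divide_distrib diff_divide_distrib)
  qed (use c in simp)
  have lower: "\<phi> w + inner (w' - w) us \<le> \<phi> w'" for w'
  proof -
    have "\<phi> w - ep n + inner (w' - w) (u n) \<le> \<phi> w'" for n
    proof -
      have "val w' (u n) = val w (u n) + inner (w' - w) (u n)" by (simp add: val_def inner_diff_left)
      then show ?thesis using le_phi[OF uU, of w' n] uv[of n] by simp
    qed
    moreover have "(\<lambda>n. \<phi> w - ep n + inner (w' - w) (u n)) \<longlonglongrightarrow> \<phi> w - 0 + inner (w' - w) us"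
      by (intro tendsto_intros ep0 us)
    ultimately show ?thesis using LIMSEQ_le_const2 by fastforce
  qed
  have upper: "\<phi> w' \<le> \<phi> w + inner (w' - w) us + (norm (w' - w))\<^sup>2 / (2 * c)" for w'
    unfolding phi[of w']
  proof (rule cSup_least)
    show "val w' ` U \<noteq> {}" using ne by simp
    fix r assume "r \<in> val w' ` U"
    then obtain v where v: "v \<in> U" and r: "r = val w' v" by auto
    have "val w' v = val w v + inner (w' - w) us + inner (w' - w) (v - us)"
      by (simp add: val_def inner_diff_left inner_diff_right)
    also have "\<dots> \<le> (\<phi> w - c / 2 * (norm (us - v))\<^sup>2) + inner (w' - w) us
                     + (c / 2 * (norm (v - us))\<^sup>2 + (norm (w' - w))\<^sup>2 / (2 * c))"
      using growth[OF v] young_inner[OF c, of "w' - w" "v - us"] by simp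
    also have "\<dots> = \<phi> w + inner (w' - w) us + (norm (w' - w))\<^sup>2 / (2 * c)"
      by (simp add: norm_minus_commute)
    finally show "r \<le> \<phi> w + inner (w' - w) us + (norm (w' - w))\<^sup>2 / (2 * c)" using r by simp
  qed
  show ?thesis using nus lower upper unfolding c_def by blast
qed

lemma opnorm_props:
  fixes A :: "'d::euclidean_space \<Rightarrow> 'm::euclidean_space"
  assumes lin: "linear A"
  shows "0 \<le> opnorm A" "norm (A x) \<le> opnorm A * norm x"
proof -
  define S where "S = {inner (A x) u | x u. norm x = 1 \<and> norm u = 1}"
  have op: "opnorm A = Sup S" by (simp add: opnorm_def S_def)
  obtain K where K: "\<And>x. norm (A x) \<le> norm x * K"
    using linear_conv_bounded_linear[of A] lin bounded_linear.bounded by blast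
  have bdd: "bdd_above S"
  proof (rule bdd_aboveI[where M = K])
    fix r assume "r \<in> S"
    then obtain x u where r: "r = inner (A x) u" and x: "norm x = 1" and u: "norm u = 1"
      unfolding S_def by blast
    have "inner (A x) u \<le> norm (A x) * norm u" by (rule Cauchy_Schwarz_ineq2[THEN order_trans[OF abs_ge_self]])
    then show "r \<le> K" using K[of x] x u r by simp
  qed
  have inS: "inner (A x) u \<le> Sup S" if "norm x = 1" "norm u = 1" for x u
    using that bdd by (intro cSup_upper) (auto simp: S_def)
  obtain e :: 'd where e: "e \<in> Basis" using nonempty_Basis by blast
  obtain f :: 'm where f: "f \<in> Basis" using nonempty_Basis by blast
  have ne: "norm e = 1" "norm f = 1" "norm (-f) = 1" using e f by auto
  have "inner (A e) f \<le> Sup S" "inner (A e) (-f) \<le> Sup S" using inS[of e f] inS[of e "-f"] ne by auto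
  then show "0 \<le> opnorm A" unfolding op by simp
  show "norm (A x) \<le> opnorm A * norm x"
  proof (cases "x = 0 \<or> A x = 0")
    case True
    then show ?thesis using \<open>0 \<le> opnorm A\<close> lin by (auto simp: linear_0)
  next
    case False
    then have x0: "x \<noteq> 0" and ax0: "A x \<noteq> 0" by auto
    have "inner (A ((1 / norm x) *\<^sub>R x)) ((1 / norm (A x)) *\<^sub>R A x) \<le> Sup S"
      using x0 ax0 by (intro inS) auto
    moreover have "inner (A ((1 / norm x) *\<^sub>R x)) ((1 / norm (A x)) *\<^sub>R A x) = norm (A x) / norm x"
      using x0 ax0 lin by (simp add: linear_scale dot_square_norm power2_eq_square)
    ultimately have "norm (A x) / norm x \<le> Sup S" by simp
    then show ?thesis using x0 by (simp add: op pos_divide_le_eq mult.commute)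
  qed
qed

lemma gderiv_from_bounds:
  fixes f :: "'a::euclidean_space \<Rightarrow> real"
  assumes "\<And>d. \<bar>f (z + d) - f z - inner d G\<bar> \<le> K * (norm d)\<^sup>2"
  shows "GDERIV f z :> G"
  unfolding gderiv_def has_derivative_at
proof
  show "bounded_linear (\<lambda>h. inner h G)" by (rule bounded_linear_inner_left)
  have "(\<lambda>h::'a. \<bar>K\<bar> * norm h) \<midarrow>0\<rightarrow> \<bar>K\<bar> * norm (0::'a)" by (intro tendsto_intros)
  then have lim: "(\<lambda>h::'a. \<bar>K\<bar> * norm h) \<midarrow>0\<rightarrow> 0" by simp
  show "(\<lambda>h. norm (f (z + h) - f z - inner h G) / norm h) \<midarrow>0\<rightarrow> 0"
  proof (rule Lim_null_comparison[OF _ lim])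
    show "\<forall>\<^sub>F h in at 0. norm (norm (f (z + h) - f z - inner h G) / norm h) \<le> \<bar>K\<bar> * norm h"
    proof (rule always_eventually, rule allI)
      fix h :: 'a
      show "norm (norm (f (z + h) - f z - inner h G) / norm h) \<le> \<bar>K\<bar> * norm h"
      proof (cases "h = 0")
        case False
        have "\<bar>f (z + h) - f z - inner h G\<bar> \<le> \<bar>K\<bar> * (norm h * norm h)"
          using assms[of h] by (smt (verit) abs_ge_self mult_right_mono norm_ge_zero power2_eq_square zero_le_mult_iff)
        then show ?thesis using False by (simp add: field_simps)
      qed simp
    qed
  qed
qed

lemma grad_eq:
  fixes f :: "'a::euclidean_space \<Rightarrow> real"
  assumes "GDERIV f z :> G"
  shows "grad f z = G"
proof -
  have g: "GDERIV f z :> grad f z" unfolding grad_def using assms by (rule someI)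
  have "(\<lambda>h. inner h (grad f z)) = (\<lambda>h. inner h G)"
    using has_derivative_unique[OF g[unfolded gderiv_def] assms[unfolded gderiv_def]] .
  then have "inner (grad f z - G) (grad f z) = inner (grad f z - G) G" by metis
  then have "inner (grad f z - G) (grad f z - G) = 0" by (simp add: inner_diff_right)
  then show ?thesis by simp
qed



lemma gderiv_exists:
  fixes f :: "'a::euclidean_space \<Rightarrow> real"
  assumes "f differentiable (at z)"
  shows "GDERIV f z :> grad f z"
proof -
  obtain D where D: "(f has_derivative D) (at z)" using assms unfolding differentiable_def by blast
  have lin: "linear D" using D has_derivative_linear by blast
  define v where "v = (\<Sum>b\<in>Basis. D b *\<^sub>R b)"
  have "D h = inner h v" for h
  proof -
    have "D h = D (\<Sum>b\<in>Basis. inner h b *\<^sub>R b)" by (simp add: euclidean_representation)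
    also have "\<dots> = (\<Sum>b\<in>Basis. inner h b * D b)"
      using lin by (simp add: linear_sum linear_scale)
    also have "\<dots> = inner h v" by (simp add: v_def inner_sum_right mult.commute)
    finally show ?thesis .
  qed
  then have "D = (\<lambda>h. inner h v)" by auto
  then have "GDERIV f z :> v" using D by (simp add: gderiv_def)
  then show ?thesis unfolding grad_def by (rule someI)
qed

locale fsetup =
  fixes P :: "'b measure" and A :: "'b \<Rightarrow> 'd::euclidean_space \<Rightarrow> 'm::euclidean_space"
    and U :: "'m set" and Q om :: "'m \<Rightarrow> real" and \<zeta> R B DU :: real
    and g :: "'d \<Rightarrow> 'b \<Rightarrow> real" and Lg \<mu> :: real
  assumes P: "prob_space P"
    and U_convex: "convex U" and U_ne: "U \<noteq> {}" and Q_convex: "convex_on U Q"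
    and om_nonneg: "\<And>u. u \<in> U \<Longrightarrow> 0 \<le> om u"
    and zeta_pos: "\<zeta> > 0" and om_sc: "strongly_convex_on U om \<zeta>"
    and om_bdd: "bdd_above (om ` U)" and DU_def: "DU = Sup (om ` U)"
    and A_lin: "\<And>s. linear (A s)"
    and A_sq_int: "integrable P (\<lambda>s. (opnorm (A s))\<^sup>2)"
    and R: "\<forall>u\<in>U. norm u \<le> R" and B: "\<forall>u\<in>U. B \<le> Q u"
    and g_int: "\<And>z. integrable P (g z)"
    and g_grad_meas: "(\<lambda>p. grad (\<lambda>z. g z (snd p)) (fst p)) \<in> borel_measurable (borel \<Otimes>\<^sub>M P)"
    and g_grad_unbiased: "\<And>z. integrable P (\<lambda>s. grad (\<lambda>z. g z s) z)
                               \<and> (\<integral>s. grad (\<lambda>z. g z s) z \<partial>P) = grad (\<lambda>z. \<integral>s. g z s \<partial>P) z"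
    and gbar_diff: "\<And>z. (\<lambda>z. \<integral>s. g z s \<partial>P) differentiable (at z)"
    and gbar_smooth: "\<And>x y. (\<integral>s. g x s \<partial>P) \<le> (\<integral>s. g y s \<partial>P) + inner (grad (\<lambda>z. \<integral>s. g z s \<partial>P) y) (x - y) + Lg / 2 * (norm (x - y))\<^sup>2"
    and gbar_sc: "\<And>x y. (\<integral>s. g x s \<partial>P) \<ge> (\<integral>s. g y s \<partial>P) + inner (grad (\<lambda>z. \<integral>s. g z s \<partial>P) y) (x - y) + \<mu> / 2 * (norm (x - y))\<^sup>2"
    and fhat_int: "\<And>z c. c > 0 \<Longrightarrow> integrable P (fhat A U Q om c z)"
    and fhat_grad_meas: "\<And>c. c > 0 \<Longrightarrow>
          (\<lambda>p. grad (\<lambda>z. fhat A U Q om c z (snd p)) (fst p)) \<in> borel_measurable (borel \<Otimes>\<^sub>M P)"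
begin

abbreviation "gbar \<equiv> \<lambda>z. \<integral>s. g z s \<partial>P"
abbreviation "fh c z s \<equiv> fhat A U Q om c z s"
abbreviation "gf c z s \<equiv> grad (\<lambda>z. fhat A U Q om c z s) z"

lemma fhat_bdd: "0 \<le> c \<Longrightarrow> bdd_above ((\<lambda>u. inner w u - Q u - c * om u) ` U)"
proof (rule bdd_aboveI2)
  fix u assume c: "0 \<le> c" and u: "u \<in> U"
  have "inner w u \<le> norm w * R"
    using Cauchy_Schwarz_ineq2[of w u] R u by (smt (verit) mult_left_mono norm_ge_zero)
  then show "inner w u - Q u - c * om u \<le> norm w * R - B" using B om_nonneg[OF u] u c
    by (smt (verit) mult_nonneg_nonneg)
qed

lemma fhat_gamma:
  assumes c': "0 < c'" "c' \<le> c"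
  shows "fh c z s \<le> fh c' z s \<and> fh c' z s \<le> fh c z s + (c - c') * DU"
proof
  let ?S = "\<lambda>c. (\<lambda>u. inner (A s z) u - Q u - c * om u) ` U"
  have b: "bdd_above (?S c)" "bdd_above (?S c')" using fhat_bdd c' by auto
  show "fh c z s \<le> fh c' z s" unfolding fhat_def
  proof (rule cSup_least)
    show "?S c \<noteq> {}" using U_ne by simp
    fix r assume "r \<in> ?S c"
    then obtain u where u: "u \<in> U" and r: "r = inner (A s z) u - Q u - c * om u" by auto
    have "r \<le> inner (A s z) u - Q u - c' * om u" using r c' om_nonneg[OF u]
      by (simp add: mult_right_mono)
    also have "\<dots> \<le> Sup (?S c')" using b u by (intro cSup_upper) auto
    finally show "r \<le> Sup (?S c')" .
  qed
  show "fh c' z s \<le> fh c z s + (c - c') * DU" unfolding fhat_def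
  proof (rule cSup_least)
    show "?S c' \<noteq> {}" using U_ne by simp
    fix r assume "r \<in> ?S c'"
    then obtain u where u: "u \<in> U" and r: "r = inner (A s z) u - Q u - c' * om u" by auto
    have "om u \<le> DU" unfolding DU_def using om_bdd u by (intro cSup_upper) auto
    then have "(c - c') * om u \<le> (c - c') * DU" using c' by (intro mult_left_mono) auto
    then have "c * om u - c' * om u \<le> c * DU - c' * DU" by (simp add: left_diff_distrib)
    then have "r \<le> (inner (A s z) u - Q u - c * om u) + (c - c') * DU" using r
      by (simp add: left_diff_distrib)
    also have "\<dots> \<le> Sup (?S c) + (c - c') * DU" using b u by (intro add_right_mono cSup_upper) auto
    finally show "r \<le> Sup (?S c) + (c - c') * DU" .
  qed
qed

lemma fhat_G:
  assumes c: "c > 0"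
  shows "\<exists>G. norm G \<le> opnorm (A s) * R \<and>
            (\<forall>z'. 0 \<le> fh c z' s - fh c z s - inner G (z' - z) \<and>
                  fh c z' s - fh c z s - inner G (z' - z) \<le> (opnorm (A s))\<^sup>2 / (2 * (c * \<zeta>)) * (norm (z' - z))\<^sup>2)"
proof -
  obtain u where nu: "norm u \<le> R"
    and lo: "\<And>w'. fhat A U Q om c z s + inner (w' - A s z) u \<le> Sup ((\<lambda>u. inner w' u - Q u - c * om u) ` U)"
    and up: "\<And>w'. Sup ((\<lambda>u. inner w' u - Q u - c * om u) ` U) \<le> fhat A U Q om c z s + inner (w' - A s z) u + (norm (w' - A s z))\<^sup>2 / (2 * (c * \<zeta>))"
    using conj_key[OF U_convex U_ne Q_convex om_sc zeta_pos c R B, of "A s z"] om_nonneg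
    unfolding fhat_def by blast
  define G where "G = adjoint (A s) u"
  have adj: "inner (A s d) u = inner d G" for d unfolding G_def using adjoint_works[OF A_lin[of s]] by simp
  have op: "norm (A s d) \<le> opnorm (A s) * norm d" "0 \<le> opnorm (A s)" for d
    using opnorm_props[OF A_lin[of s]] by auto
  have "(norm G)\<^sup>2 = inner (A s G) u" by (simp add: adj power2_norm_eq_inner)
  also have "\<dots> \<le> norm (A s G) * norm u" by (rule Cauchy_Schwarz_ineq2[THEN order_trans[OF abs_ge_self]])
  also have "\<dots> \<le> (opnorm (A s) * norm G) * R"
    using op(1)[of G] op(2) nu by (intro mult_mono) auto
  finally have "norm G * norm G \<le> norm G * (opnorm (A s) * R)" by (simp add: power2_eq_square algebra_simps)
  then have nG: "norm G \<le> opnorm (A s) * R"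
    using op(2) nu by (cases "norm G = 0") (auto simp: mult_le_cancel_left, smt (verit) mult_nonneg_nonneg norm_ge_zero)
  have "0 \<le> fh c z' s - fh c z s - inner G (z' - z) \<and>
        fh c z' s - fh c z s - inner G (z' - z) \<le> (opnorm (A s))\<^sup>2 / (2 * (c * \<zeta>)) * (norm (z' - z))\<^sup>2" for z'
  proof -
    have Az: "A s z' - A s z = A s (z' - z)" using A_lin[of s] by (simp add: linear_diff)
    have e: "fh c z' s = Sup ((\<lambda>u. inner (A s z') u - Q u - c * om u) ` U)" by (simp add: fhat_def)
    have i: "inner (A s z' - A s z) u = inner G (z' - z)" using Az adj by (simp add: inner_commute)
    have "(norm (A s (z' - z)))\<^sup>2 \<le> (opnorm (A s) * norm (z' - z))\<^sup>2"
      using op(1)[of "z' - z"] op(2) by (intro power_mono) auto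
    then have q: "(norm (A s (z' - z)))\<^sup>2 / (2 * (c * \<zeta>)) \<le> (opnorm (A s))\<^sup>2 / (2 * (c * \<zeta>)) * (norm (z' - z))\<^sup>2"
      using c zeta_pos by (simp add: divide_right_mono power_mult_distrib)
    show ?thesis using lo[of "A s z'"] up[of "A s z'"] e i q Az by auto
  qed
  then show ?thesis using nG by blast
qed

lemma fhat_grad:
  assumes c: "c > 0"
  shows "norm (gf c z s) \<le> opnorm (A s) * R"
    and "0 \<le> fh c z' s - fh c z s - inner (gf c z s) (z' - z)"
    and "fh c z' s - fh c z s - inner (gf c z s) (z' - z) \<le> (opnorm (A s))\<^sup>2 / (2 * (c * \<zeta>)) * (norm (z' - z))\<^sup>2"
    and "GDERIV (\<lambda>z. fh c z s) z :> gf c z s"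
proof -
  obtain G where nG: "norm G \<le> opnorm (A s) * R" and bd: "\<And>z'. 0 \<le> fh c z' s - fh c z s - inner G (z' - z) \<and>
                  fh c z' s - fh c z s - inner G (z' - z) \<le> (opnorm (A s))\<^sup>2 / (2 * (c * \<zeta>)) * (norm (z' - z))\<^sup>2"
    using fhat_G[OF c, of s z] by blast
  have gd: "GDERIV (\<lambda>z. fh c z s) z :> G"
  proof (rule gderiv_from_bounds[where K = "(opnorm (A s))\<^sup>2 / (2 * (c * \<zeta>))"])
    fix d show "\<bar>fh c (z + d) s - fh c z s - inner d G\<bar> \<le> (opnorm (A s))\<^sup>2 / (2 * (c * \<zeta>)) * (norm d)\<^sup>2"
      using bd[of "z + d"] by (simp add: inner_commute)
  qed
  have eq: "gf c z s = G" by (rule grad_eq[OF gd])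
  show "norm (gf c z s) \<le> opnorm (A s) * R" using nG eq by simp
  show "0 \<le> fh c z' s - fh c z s - inner (gf c z s) (z' - z)" using bd eq by simp
  show "fh c z' s - fh c z s - inner (gf c z s) (z' - z) \<le> (opnorm (A s))\<^sup>2 / (2 * (c * \<zeta>)) * (norm (z' - z))\<^sup>2"
    using bd eq by simp
  show "GDERIV (\<lambda>z. fh c z s) z :> gf c z s" using gd eq by simp
qed

end


context fsetup begin

lemma opnorm_meas: "(\<lambda>s. opnorm (A s)) \<in> borel_measurable P"
proof -
  have m: "(\<lambda>s. (opnorm (A s))\<^sup>2) \<in> borel_measurable P" using A_sq_int by auto
  have "(\<lambda>s. sqrt ((opnorm (A s))\<^sup>2)) \<in> borel_measurable P"
    using measurable_compose[OF m borel_measurable_sqrt] by (simp add: comp_def)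
  moreover have "sqrt ((opnorm (A s))\<^sup>2) = opnorm (A s)" for s
    using opnorm_props(1)[OF A_lin[of s]] by simp
  ultimately show ?thesis by simp
qed

lemma opnorm_int: "integrable P (\<lambda>s. opnorm (A s))"
proof (rule Bochner_Integration.integrable_bound[OF _ opnorm_meas])
  interpret prob_space P by (rule P)
  show "integrable P (\<lambda>s. (opnorm (A s))\<^sup>2 + 1)" using A_sq_int by simp
  show "AE x in P. norm (opnorm (A x)) \<le> norm ((opnorm (A x))\<^sup>2 + 1)"
  proof (rule AE_I2)
    fix x
    have "0 \<le> (\<bar>opnorm (A x)\<bar> - 1)\<^sup>2" by simp
    also have "\<dots> = (opnorm (A x))\<^sup>2 - 2 * \<bar>opnorm (A x)\<bar> + 1"
      by (simp add: power2_diff)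
    finally have "\<bar>opnorm (A x)\<bar> \<le> (opnorm (A x))\<^sup>2 + 1" by simp
    then show "norm (opnorm (A x)) \<le> norm ((opnorm (A x))\<^sup>2 + 1)" by simp
  qed
qed

lemma gf_meas: "c > 0 \<Longrightarrow> (\<lambda>s. gf c z s) \<in> borel_measurable P"
proof -
  assume c: "c > 0"
  have "(\<lambda>s. (z, s)) \<in> P \<rightarrow>\<^sub>M borel \<Otimes>\<^sub>M P" by simp
  from measurable_compose[OF this fhat_grad_meas[OF c]] show ?thesis by simp
qed

lemma gg_meas: "(\<lambda>s. grad (\<lambda>z. g z s) z) \<in> borel_measurable P"
proof -
  have "(\<lambda>s. (z, s)) \<in> P \<rightarrow>\<^sub>M borel \<Otimes>\<^sub>M P" by simp
  from measurable_compose[OF this g_grad_meas] show ?thesis by simp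
qed

lemma gf_int: "c > 0 \<Longrightarrow> integrable P (\<lambda>s. gf c z s)"
proof -
  assume c: "c > 0"
  show ?thesis
  proof (rule Bochner_Integration.integrable_bound[OF _ gf_meas[OF c]])
    show "integrable P (\<lambda>s. opnorm (A s) * R)" using opnorm_int by simp
    show "AE x in P. norm (gf c z x) \<le> norm (opnorm (A x) * R)"
    proof (rule AE_I2)
      fix x
      have "norm (gf c z x) \<le> opnorm (A x) * R" by (rule fhat_grad(1)[OF c])
      also have "\<dots> \<le> norm (opnorm (A x) * R)" by simp
      finally show "norm (gf c z x) \<le> norm (opnorm (A x) * R)" .
    qed
  qed
qed

definition "EF c z = (\<integral>s. fh c z s \<partial>P)"
definition "GE c z = (\<integral>s. gf c z s \<partial>P)"
definition "K2 = (\<integral>s. (opnorm (A s))\<^sup>2 \<partial>P)"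

lemma EF_bounds:
  assumes c: "c > 0"
  shows "0 \<le> EF c z' - EF c z - inner (GE c z) (z' - z)"
    and "EF c z' - EF c z - inner (GE c z) (z' - z) \<le> K2 / (2 * (c * \<zeta>)) * (norm (z' - z))\<^sup>2"
proof -
  have i1: "integrable P (\<lambda>s. inner (gf c z s) (z' - z))" using gf_int[OF c] by simp
  have eq: "EF c z' - EF c z - inner (GE c z) (z' - z)
          = (\<integral>s. fh c z' s - fh c z s - inner (gf c z s) (z' - z) \<partial>P)"
    unfolding EF_def GE_def
    using fhat_int[OF c] gf_int[OF c] i1 by (simp add: integral_inner_left)
  have int: "integrable P (\<lambda>s. fh c z' s - fh c z s - inner (gf c z s) (z' - z))"
    using fhat_int[OF c] i1 by simp
  show "0 \<le> EF c z' - EF c z - inner (GE c z) (z' - z)"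
    unfolding eq using fhat_grad(2)[OF c] by (intro integral_nonneg_AE AE_I2) auto
  have "(\<integral>s. fh c z' s - fh c z s - inner (gf c z s) (z' - z) \<partial>P)
        \<le> (\<integral>s. (opnorm (A s))\<^sup>2 / (2 * (c * \<zeta>)) * (norm (z' - z))\<^sup>2 \<partial>P)"
    using int A_sq_int fhat_grad(3)[OF c] by (intro integral_mono) auto
  also have "\<dots> = K2 / (2 * (c * \<zeta>)) * (norm (z' - z))\<^sup>2"
    unfolding K2_def using A_sq_int by simp
  finally show "EF c z' - EF c z - inner (GE c z) (z' - z) \<le> K2 / (2 * (c * \<zeta>)) * (norm (z' - z))\<^sup>2"
    using eq by simp
qed

lemma K2_nonneg: "0 \<le> K2" unfolding K2_def by (intro integral_nonneg_AE AE_I2) auto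

lemma Fobj_eq: "c > 0 \<Longrightarrow> Fobj P A U Q om g z c = EF c z + gbar z"
  unfolding Fobj_def EF_def using fhat_int g_int by simp

lemma gbar_gderiv: "GDERIV gbar z :> grad gbar z"
  by (rule gderiv_exists[OF gbar_diff])

lemma F_gderiv:
  assumes c: "c > 0"
  shows "GDERIV (\<lambda>z. Fobj P A U Q om g z c) z :> GE c z + grad gbar z"
proof -
  have "GDERIV (EF c) z :> GE c z"
  proof (rule gderiv_from_bounds[where K = "K2 / (2 * (c * \<zeta>))"])
    fix d
    show "\<bar>EF c (z + d) - EF c z - inner d (GE c z)\<bar> \<le> K2 / (2 * (c * \<zeta>)) * (norm d)\<^sup>2"
      using EF_bounds[OF c, of "z + d" z] by (simp add: inner_commute)
  qed
  from GDERIV_add[OF this gbar_gderiv] have "GDERIV (\<lambda>z. EF c z + gbar z) z :> GE c z + grad gbar z" .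
  moreover have "(\<lambda>z. Fobj P A U Q om g z c) = (\<lambda>z. EF c z + gbar z)" using Fobj_eq[OF c] by auto
  ultimately show ?thesis by simp
qed

lemma F_grad: "c > 0 \<Longrightarrow> grad (\<lambda>z. Fobj P A U Q om g z c) z = GE c z + grad gbar z"
  by (rule grad_eq[OF F_gderiv])

lemma F_smooth:
  assumes c: "c > 0"
  shows "Fobj P A U Q om g z' c \<le> Fobj P A U Q om g z c + inner (grad (\<lambda>z. Fobj P A U Q om g z c) z) (z' - z)
           + (Lg + K2 / (c * \<zeta>)) / 2 * (norm (z' - z))\<^sup>2"
proof -
  have g: "grad (\<lambda>z. Fobj P A U Q om g z c) z = GE c z + grad gbar z" by (rule F_grad[OF c])
  have "K2 / (2 * (c * \<zeta>)) = K2 / (c * \<zeta>) / 2" by simp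
  then have X: "EF c z' + gbar z' \<le> EF c z + gbar z + inner (GE c z + grad gbar z) (z' - z)
           + (Lg + K2 / (c * \<zeta>)) / 2 * (norm (z' - z))\<^sup>2"
    using EF_bounds(2)[OF c, of z' z] gbar_smooth[where x=z' and y=z]
    by (simp add: inner_add_left algebra_simps add_divide_distrib)
  show ?thesis apply (subst g) apply (simp only: Fobj_eq[OF c]) using X by simp
qed

lemma F_sc:
  assumes c: "c > 0"
  shows "Fobj P A U Q om g z c + inner (grad (\<lambda>z. Fobj P A U Q om g z c) z) (z' - z)
           + \<mu> / 2 * (norm (z' - z))\<^sup>2 \<le> Fobj P A U Q om g z' c"
proof -
  have g: "grad (\<lambda>z. Fobj P A U Q om g z c) z = GE c z + grad gbar z" by (rule F_grad[OF c])
  have X: "EF c z + gbar z + inner (GE c z + grad gbar z) (z' - z)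
           + \<mu> / 2 * (norm (z' - z))\<^sup>2 \<le> EF c z' + gbar z'"
    using EF_bounds(1)[OF c, of z' z] gbar_sc[where x=z' and y=z]
    by (simp add: inner_add_left algebra_simps)
  show ?thesis apply (subst g) apply (simp only: Fobj_eq[OF c]) using X by simp
qed

lemma F_unbiased:
  assumes c: "c > 0"
  shows "integrable P (\<lambda>s. gf c y s + grad (\<lambda>z. g z s) y)"
    and "(\<integral>s. gf c y s + grad (\<lambda>z. g z s) y \<partial>P) = grad (\<lambda>z. Fobj P A U Q om g z c) y"
proof -
  show "integrable P (\<lambda>s. gf c y s + grad (\<lambda>z. g z s) y)" using gf_int[OF c] g_grad_unbiased by simp
  show "(\<integral>s. gf c y s + grad (\<lambda>z. g z s) y \<partial>P) = grad (\<lambda>z. Fobj P A U Q om g z c) y"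
    using gf_int[OF c] g_grad_unbiased[of y] unfolding F_grad[OF c] GE_def by simp
qed

lemma F_gamma:
  assumes c': "0 < c'" "c' \<le> c"
  shows "Fobj P A U Q om g z c \<le> Fobj P A U Q om g z c'"
    and "Fobj P A U Q om g z c' \<le> Fobj P A U Q om g z c + (c - c') * DU"
proof -
  interpret prob_space P by (rule P)
  have c: "c > 0" using c' by simp
  show "Fobj P A U Q om g z c \<le> Fobj P A U Q om g z c'"
    unfolding Fobj_eq[OF c] Fobj_eq[OF c'(1)] EF_def
    using fhat_int[OF c] fhat_int[OF c'(1)] fhat_gamma[OF c'] by (simp add: integral_mono)
  have "EF c' z \<le> (\<integral>s. fh c z s + (c - c') * DU \<partial>P)"
    unfolding EF_def using fhat_int[OF c] fhat_int[OF c'(1)] fhat_gamma[OF c'] by (intro integral_mono) auto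
  also have "\<dots> = EF c z + (c - c') * DU" unfolding EF_def using fhat_int[OF c] by (simp add: prob_space)
  finally show "Fobj P A U Q om g z c' \<le> Fobj P A U Q om g z c + (c - c') * DU"
    unfolding Fobj_eq[OF c] Fobj_eq[OF c'(1)] by simp
qed

lemma F_cont: "c > 0 \<Longrightarrow> continuous_on UNIV (\<lambda>z. Fobj P A U Q om g z c)"
  using F_gderiv unfolding gderiv_def
  by (meson continuous_at_imp_continuous_on has_derivative_continuous)

lemma F_meas: "c > 0 \<Longrightarrow> (\<lambda>z. Fobj P A U Q om g z c) \<in> borel_measurable borel"
  using F_cont by (rule borel_measurable_continuous_onI)

lemma Gs_meas: "c > 0 \<Longrightarrow> (\<lambda>p. gf c (fst p) (snd p) + grad (\<lambda>z. g z (snd p)) (fst p)) \<in> borel_measurable (borel \<Otimes>\<^sub>M P)"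
  using fhat_grad_meas g_grad_meas by (intro borel_measurable_add) auto

lemma gradF_meas:
  assumes c: "c > 0"
  shows "(\<lambda>y. grad (\<lambda>z. Fobj P A U Q om g z c) y) \<in> borel_measurable borel"
proof -
  interpret prob_space P by (rule P)
  have "case_prod (\<lambda>y s. gf c y s + grad (\<lambda>z. g z s) y) \<in> borel_measurable (borel \<Otimes>\<^sub>M P)"
    using Gs_meas[OF c] by (simp add: case_prod_beta')
  then have "(\<lambda>y. \<integral>s. gf c y s + grad (\<lambda>z. g z s) y \<partial>P) \<in> borel_measurable borel"
    by (rule borel_measurable_lebesgue_integral)
  then show ?thesis using F_unbiased(2)[OF c] by simp
qed

lemma Lg_ge_mu: "\<mu> \<le> Lg"
proof -
  obtain e :: 'd where e: "e \<in> Basis" using nonempty_Basis by blast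
  have "\<mu> / 2 * (norm e)\<^sup>2 \<le> Lg / 2 * (norm e)\<^sup>2"
    using gbar_smooth[where x="0 + e" and y=0] gbar_sc[where x="0 + e" and y=0] by simp
  then show ?thesis using e by simp
qed

end


lemma norm_sq_expand:
  fixes u v :: "'a::real_inner"
  shows "(norm (u + v))\<^sup>2 = (norm u)\<^sup>2 + 2 * inner u v + (norm v)\<^sup>2"
    and "(norm (u - v))\<^sup>2 = (norm u)\<^sup>2 - 2 * inner u v + (norm v)\<^sup>2"
  by (simp_all add: power2_norm_eq_inner inner_add_left inner_add_right inner_diff_left inner_diff_right
      inner_commute[of v u])

lemma I1_real:
  fixes c \<mu> \<theta> \<alpha> ee eb bb ge gb gg :: real
  assumes c: "c > 0" and m: "\<mu> = c - \<theta>"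
  shows "- (\<alpha> * \<theta> / c) * gb + \<alpha> * ge + \<alpha> * \<mu> / 2 * ee + \<alpha> * \<theta> / 2 * (ee - 2 * eb + bb)
     - \<alpha> * c / 2 * (ee - 2 * (\<theta> / c) * eb + (\<theta> / c)\<^sup>2 * bb + 2 * (1 / c) * ge - 2 * (\<theta> / c) * (1 / c) * gb + (1 / c)\<^sup>2 * gg)
   = \<alpha> * \<mu> * \<theta> / (2 * c) * bb - \<alpha> / (2 * c) * gg"
  unfolding m using c by (simp add: field_simps power2_eq_square)

lemma young_step:
  fixes c d L \<alpha> gg sG ss :: real
  assumes c: "c > 0" and d: "d = c - \<alpha> * L" and d0: "d > 0"
    and Y: "sG \<le> d / c / 2 * gg + ss / (2 * (d / c))" and a: "\<alpha> \<ge> 0"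
  shows "- (\<alpha> / c) * (gg - sG) + L * \<alpha>\<^sup>2 / (2 * c\<^sup>2) * gg \<le> - (\<alpha> / (2 * c)) * gg + \<alpha> / (2 * d) * ss"
proof -
  have m: "(\<alpha> / c) * sG \<le> (\<alpha> / c) * (d / c / 2 * gg + ss / (2 * (d / c)))"
    using Y a c by (intro mult_left_mono) auto
  have e1: "(\<alpha> / c) * (d / c / 2 * gg + ss / (2 * (d / c))) = \<alpha> * d / (2 * c\<^sup>2) * gg + \<alpha> / (2 * d) * ss"
    using c d0 by (simp add: field_simps power2_eq_square)
  have e2: "\<alpha> * d / (2 * c\<^sup>2) * gg = \<alpha> / (2 * c) * gg - L * \<alpha>\<^sup>2 / (2 * c\<^sup>2) * gg"
    using c unfolding d by (simp add: field_simps power2_eq_square)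
  have e3: "- (\<alpha> / c) * (gg - sG) = - (2 * (\<alpha> / (2 * c) * gg)) + (\<alpha> / c) * sG"
    using c by (simp add: field_simps)
  show ?thesis using m e1 e2 e3 by linarith
qed

lemma step_ineq:
  fixes F :: "'d::real_inner \<Rightarrow> real" and gF :: "'d \<Rightarrow> 'd" and xt vt x G :: 'd
  assumes S: "\<And>a b. F a \<le> F b + inner (gF b) (a - b) + L / 2 * (norm (a - b))\<^sup>2"
    and C: "\<And>a b. F b + inner (gF b) (a - b) + \<mu> / 2 * (norm (a - b))\<^sup>2 \<le> F a"
    and mu: "\<mu> \<ge> 0" and th: "\<theta> \<ge> 0" and al: "0 \<le> \<alpha>" "\<alpha> \<le> 1"
    and cL: "\<mu> + \<theta> - \<alpha> * L > 0" and Lmu: "\<mu> \<le> L"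
  defines "y \<equiv> ansgd_y \<mu> \<alpha> \<theta> xt vt"
  shows "F (y - (\<alpha> / (\<mu> + \<theta>)) *\<^sub>R G)
     \<le> (1 - \<alpha>) * F xt + \<alpha> * F x + \<alpha> * \<theta> / 2 * (norm (x - vt))\<^sup>2
       - \<alpha> * (\<mu> + \<theta>) / 2 * (norm (x - (1 / (\<mu> + \<theta>)) *\<^sub>R (\<theta> *\<^sub>R vt + \<mu> *\<^sub>R y - G)))\<^sup>2
       + \<alpha> / (2 * (\<mu> + \<theta> - \<alpha> * L)) * (norm (G - gF y))\<^sup>2
       + inner (G - gF y) ((1 - \<alpha>) *\<^sub>R xt + \<alpha> *\<^sub>R x - y)"
proof -
  define c where "c = \<mu> + \<theta>"
  define k where "k = \<mu> + \<theta> - \<alpha> * \<mu>"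
  have L0: "0 \<le> L" using mu Lmu by simp
  have c0: "c > 0" using cL al L0 unfolding c_def by (smt (verit) mult_nonneg_nonneg)
  have k0: "k > 0" using cL al Lmu unfolding k_def by (smt (verit) mult_left_mono)
  have kd: "\<mu> * (1 - \<alpha>) + \<theta> = k" by (simp add: k_def algebra_simps)
  define a where "a = xt - y"
  define b where "b = vt - y"
  define e where "e = x - y"
  define s where "s = G - gF y"
  have ky: "k *\<^sub>R y = ((1 - \<alpha>) * c) *\<^sub>R xt + (\<alpha> * \<theta>) *\<^sub>R vt"
    using k0 unfolding y_def ansgd_y_def kd c_def by (simp add: scaleR_add_right)
  have Ra: "(1 - \<alpha>) *\<^sub>R a = (- (\<alpha> * \<theta> / c)) *\<^sub>R b"
  proof -
    have "((1 - \<alpha>) * c) *\<^sub>R a + (\<alpha> * \<theta>) *\<^sub>R b = ((1 - \<alpha>) * c) *\<^sub>R xt + (\<alpha> * \<theta>) *\<^sub>R vt - ((1 - \<alpha>) * c + \<alpha> * \<theta>) *\<^sub>R y"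
      by (simp add: a_def b_def algebra_simps)
    also have "(1 - \<alpha>) * c + \<alpha> * \<theta> = k" by (simp add: k_def c_def algebra_simps)
    finally have "((1 - \<alpha>) * c) *\<^sub>R a + (\<alpha> * \<theta>) *\<^sub>R b = 0" using ky by simp
    then have "c *\<^sub>R ((1 - \<alpha>) *\<^sub>R a) = c *\<^sub>R ((- (\<alpha> * \<theta> / c)) *\<^sub>R b)"
      using c0 by (simp add: algebra_simps)
    then show ?thesis by (metis c0 less_irrefl scaleR_cancel_left)
  qed
  have xv: "x - (1 / c) *\<^sub>R (\<theta> *\<^sub>R vt + \<mu> *\<^sub>R y - G) = e - (\<theta> / c) *\<^sub>R b + (1 / c) *\<^sub>R G"
  proof -
    have "(1 / c) *\<^sub>R (\<theta> *\<^sub>R vt + \<mu> *\<^sub>R y - G) = (1 / c) *\<^sub>R (\<theta> *\<^sub>R b + c *\<^sub>R y - G)"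
      by (simp add: b_def c_def algebra_simps)
    also have "\<dots> = (\<theta> / c) *\<^sub>R b + y - (1 / c) *\<^sub>R G" using c0 by (simp add: algebra_simps)
    finally show ?thesis by (simp add: e_def algebra_simps)
  qed
  have w: "(1 - \<alpha>) *\<^sub>R xt + \<alpha> *\<^sub>R x - y = (1 - \<alpha>) *\<^sub>R a + \<alpha> *\<^sub>R e"
    by (simp add: a_def e_def algebra_simps)
  have T1: "F (y - (\<alpha> / c) *\<^sub>R G) \<le> F y - (\<alpha> / c) * inner (gF y) G + L * \<alpha>\<^sup>2 / (2 * c\<^sup>2) * (norm G)\<^sup>2"
    using S[of "y - (\<alpha> / c) *\<^sub>R G" y] by (simp add: power2_eq_square field_simps)
  have T2: "(1 - \<alpha>) * F xt \<ge> (1 - \<alpha>) * (F y + inner (gF y) a)"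
  proof -
    have "F y + inner (gF y) a \<le> F xt" using C[where a=xt and b=y] mu unfolding a_def
      by (smt (verit) mult_nonneg_nonneg zero_le_power2 divide_nonneg_pos zero_less_two)
    then show ?thesis using al by (intro mult_left_mono) auto
  qed
  have T3: "\<alpha> * F x \<ge> \<alpha> * (F y + inner (gF y) e + \<mu> / 2 * (norm e)\<^sup>2)"
    using C[where a=x and b=y] al unfolding e_def by (intro mult_left_mono) auto
  have gs: "gF y = G - s" by (simp add: s_def)
  have I1: "(1 - \<alpha>) * inner G a + \<alpha> * inner G e + \<alpha> * \<mu> / 2 * (norm e)\<^sup>2 + \<alpha> * \<theta> / 2 * (norm (e - b))\<^sup>2
            - \<alpha> * c / 2 * (norm (e - (\<theta> / c) *\<^sub>R b + (1 / c) *\<^sub>R G))\<^sup>2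
          = \<alpha> * \<mu> * \<theta> / (2 * c) * (norm b)\<^sup>2 - \<alpha> / (2 * c) * (norm G)\<^sup>2"
  proof -
    have "(1 - \<alpha>) * inner G a = inner G ((1 - \<alpha>) *\<^sub>R a)" by simp
    also have "\<dots> = - (\<alpha> * \<theta> / c) * inner G b" using Ra by simp
    finally have ia: "(1 - \<alpha>) * inner G a = - (\<alpha> * \<theta> / c) * inner G b" .
    have n1: "(norm (e - (\<theta> / c) *\<^sub>R b + (1 / c) *\<^sub>R G))\<^sup>2
        = (norm e)\<^sup>2 - 2 * (\<theta> / c) * inner e b + (\<theta> / c)\<^sup>2 * (norm b)\<^sup>2
          + 2 * (1 / c) * inner e G - 2 * (\<theta> / c) * (1 / c) * inner b G + (1 / c)\<^sup>2 * (norm G)\<^sup>2"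
      using c0 th by (simp add: norm_sq_expand inner_diff_left inner_add_left inner_add_right inner_diff_right
          power_divide power_mult_distrib inner_commute[of b G] algebra_simps)
    have n2: "(norm (e - b))\<^sup>2 = (norm e)\<^sup>2 - 2 * inner e b + (norm b)\<^sup>2" by (rule norm_sq_expand(2))
    show ?thesis unfolding ia n1 n2 inner_commute[of e G] inner_commute[of b G]
      by (rule I1_real[OF c0]) (simp add: c_def)
  qed
  have Y: "inner s G \<le> ((c - \<alpha> * L) / c) / 2 * (norm G)\<^sup>2 + (norm s)\<^sup>2 / (2 * ((c - \<alpha> * L) / c))"
    by (rule young_inner) (use cL c0 in \<open>simp add: c_def\<close>)
  have bnn: "0 \<le> \<alpha> * \<mu> * \<theta> / (2 * c) * (norm b)\<^sup>2" using al mu th c0 by simp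
  have "F (y - (\<alpha> / c) *\<^sub>R G) \<le> F y - (\<alpha> / c) * inner (G - s) G + L * \<alpha>\<^sup>2 / (2 * c\<^sup>2) * (norm G)\<^sup>2"
    using T1 gs by simp
  also have "\<dots> \<le> F y - \<alpha> / (2 * c) * (norm G)\<^sup>2 + \<alpha> / (2 * (c - \<alpha> * L)) * (norm s)\<^sup>2"
  proof -
    have d0: "c - \<alpha> * L > 0" using cL by (simp add: c_def)
    have ig: "inner (G - s) G = (norm G)\<^sup>2 - inner s G" by (simp add: inner_diff_left power2_norm_eq_inner)
    show ?thesis using young_step[OF c0 refl d0 Y al(1)] unfolding ig by simp
  qed
  also have "\<dots> \<le> (1 - \<alpha>) * (F y + inner (gF y) a) + \<alpha> * (F y + inner (gF y) e + \<mu> / 2 * (norm e)\<^sup>2)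
       + \<alpha> * \<theta> / 2 * (norm (e - b))\<^sup>2 - \<alpha> * c / 2 * (norm (e - (\<theta> / c) *\<^sub>R b + (1 / c) *\<^sub>R G))\<^sup>2
       + \<alpha> / (2 * (c - \<alpha> * L)) * (norm s)\<^sup>2 + inner s ((1 - \<alpha>) *\<^sub>R a + \<alpha> *\<^sub>R e)"
  proof -
    have "(1 - \<alpha>) * (F y + inner (gF y) a) + \<alpha> * (F y + inner (gF y) e + \<mu> / 2 * (norm e)\<^sup>2)
       + \<alpha> * \<theta> / 2 * (norm (e - b))\<^sup>2 - \<alpha> * c / 2 * (norm (e - (\<theta> / c) *\<^sub>R b + (1 / c) *\<^sub>R G))\<^sup>2
       + inner s ((1 - \<alpha>) *\<^sub>R a + \<alpha> *\<^sub>R e)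
       = F y + ((1 - \<alpha>) * inner G a + \<alpha> * inner G e + \<alpha> * \<mu> / 2 * (norm e)\<^sup>2 + \<alpha> * \<theta> / 2 * (norm (e - b))\<^sup>2
            - \<alpha> * c / 2 * (norm (e - (\<theta> / c) *\<^sub>R b + (1 / c) *\<^sub>R G))\<^sup>2)"
      unfolding gs by (simp add: inner_diff_left inner_add_right algebra_simps)
    then show ?thesis unfolding I1 using bnn by simp
  qed
  also have "\<dots> \<le> (1 - \<alpha>) * F xt + \<alpha> * F x + \<alpha> * \<theta> / 2 * (norm (e - b))\<^sup>2
       - \<alpha> * c / 2 * (norm (e - (\<theta> / c) *\<^sub>R b + (1 / c) *\<^sub>R G))\<^sup>2
       + \<alpha> / (2 * (c - \<alpha> * L)) * (norm s)\<^sup>2 + inner s ((1 - \<alpha>) *\<^sub>R a + \<alpha> *\<^sub>R e)"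
    using T2 T3 by simp
  finally have X: "F (y - (\<alpha> / c) *\<^sub>R G) \<le> (1 - \<alpha>) * F xt + \<alpha> * F x + \<alpha> * \<theta> / 2 * (norm (e - b))\<^sup>2
       - \<alpha> * c / 2 * (norm (e - (\<theta> / c) *\<^sub>R b + (1 / c) *\<^sub>R G))\<^sup>2
       + \<alpha> / (2 * (c - \<alpha> * L)) * (norm s)\<^sup>2 + inner s ((1 - \<alpha>) *\<^sub>R a + \<alpha> *\<^sub>R e)" .
  have eb: "x - vt = e - b" by (simp add: e_def b_def)
  show ?thesis unfolding c_def[symmetric] xv w s_def[symmetric] eb using X .
qed



lemma fst_borel[measurable]: "(fst :: ('a::second_countable_topology \<times> 'b::second_countable_topology) \<Rightarrow> 'a) \<in> borel_measurable borel"
  by (rule borel_measurable_continuous_onI) (intro continuous_intros)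
lemma snd_borel[measurable]: "(snd :: ('a::second_countable_topology \<times> 'b::second_countable_topology) \<Rightarrow> 'b) \<in> borel_measurable borel"
  by (rule borel_measurable_continuous_onI) (intro continuous_intros)

context fsetup begin

definition "Gs \<gamma> k y s = gf (\<gamma> (Suc k)) y s + grad (\<lambda>z. g z s) y"
definition "it \<alpha> \<theta> \<eta> \<gamma> x0 v0 ss k = ansgd \<mu> \<alpha> \<theta> \<eta> (\<lambda>k y. Gs \<gamma> k y (ss (Suc k))) x0 v0 k"

lemma sgrad_eq: "sgrad A U Q om g \<gamma> \<xi> \<omega> = (\<lambda>k y. Gs \<gamma> k y (\<xi> (Suc k) \<omega>))"
  by (auto simp: sgrad_def Gs_def fun_eq_iff)

lemma it_local: "(\<And>i. 1 \<le> i \<Longrightarrow> i \<le> k \<Longrightarrow> ss i = ss' i) \<Longrightarrow> it \<alpha> \<theta> \<eta> \<gamma> x0 v0 ss k = it \<alpha> \<theta> \<eta> \<gamma> x0 v0 ss' k"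
proof (induction k)
  case 0 then show ?case by (simp add: it_def)
next
  case (Suc k)
  then have "it \<alpha> \<theta> \<eta> \<gamma> x0 v0 ss k = it \<alpha> \<theta> \<eta> \<gamma> x0 v0 ss' k" by simp
  moreover have "ss (Suc k) = ss' (Suc k)" using Suc.prems by simp
  ultimately show ?case by (simp add: it_def Let_def)
qed

lemma Gs_meas2:
  assumes "\<gamma> (Suc k) > 0"
  shows "(\<lambda>p. Gs \<gamma> k (fst p) (snd p)) \<in> borel_measurable (borel \<Otimes>\<^sub>M P)"
  using Gs_meas[OF assms] unfolding Gs_def .

lemma Gs_meas_comp:
  assumes "\<gamma> (Suc k) > 0" and f: "f \<in> borel_measurable N" and h: "h \<in> N \<rightarrow>\<^sub>M P"
  shows "(\<lambda>w. Gs \<gamma> k (f w) (h w)) \<in> borel_measurable N"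
proof -
  have "(\<lambda>w. (f w, h w)) \<in> N \<rightarrow>\<^sub>M borel \<Otimes>\<^sub>M P" using f h by (rule measurable_Pair)
  from measurable_compose[OF this Gs_meas2[of \<gamma> k, OF assms(1)]] show ?thesis by simp
qed

lemma ansgd_y_meas[measurable]:
  fixes f h :: "'x \<Rightarrow> 'e::euclidean_space"
  assumes [measurable]: "f \<in> borel_measurable N" "h \<in> borel_measurable N"
  shows "(\<lambda>w. ansgd_y m a th (f w) (h w)) \<in> borel_measurable N"
  unfolding ansgd_y_def by (intro borel_measurable_add borel_measurable_scaleR borel_measurable_const assms)

lemma it_meas:
  assumes gp: "\<And>k. \<gamma> k > 0"
  shows "k \<le> n \<Longrightarrow> (\<lambda>ss. it \<alpha> \<theta> \<eta> \<gamma> x0 v0 ss k) \<in> borel_measurable (Pi\<^sub>M {1..n} (\<lambda>_. P))"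
proof (induction k)
  case 0 then show ?case by (simp add: it_def)
next
  case (Suc k)
  then have m[measurable]: "(\<lambda>ss. it \<alpha> \<theta> \<eta> \<gamma> x0 v0 ss k) \<in> borel_measurable (Pi\<^sub>M {1..n} (\<lambda>_. P))" by simp
  have mf[measurable]: "(\<lambda>ss. fst (it \<alpha> \<theta> \<eta> \<gamma> x0 v0 ss k)) \<in> borel_measurable (Pi\<^sub>M {1..n} (\<lambda>_. P))"
    "(\<lambda>ss. snd (it \<alpha> \<theta> \<eta> \<gamma> x0 v0 ss k)) \<in> borel_measurable (Pi\<^sub>M {1..n} (\<lambda>_. P))"
    using measurable_compose[OF m fst_borel] measurable_compose[OF m snd_borel] by auto
  define yy where "yy ss = ansgd_y \<mu> (\<alpha> k) (\<theta> k) (fst (it \<alpha> \<theta> \<eta> \<gamma> x0 v0 ss k)) (snd (it \<alpha> \<theta> \<eta> \<gamma> x0 v0 ss k))" for ss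
  have my[measurable]: "yy \<in> borel_measurable (Pi\<^sub>M {1..n} (\<lambda>_. P))" unfolding yy_def by measurable
  have ms: "(\<lambda>ss. ss (Suc k)) \<in> Pi\<^sub>M {1..n} (\<lambda>_. P) \<rightarrow>\<^sub>M P"
    using Suc.prems by (intro measurable_component_singleton) auto
  have mg[measurable]: "(\<lambda>ss. Gs \<gamma> k (yy ss) (ss (Suc k))) \<in> borel_measurable (Pi\<^sub>M {1..n} (\<lambda>_. P))"
    by (rule Gs_meas_comp[OF gp my ms])
  have eq: "(\<lambda>ss. it \<alpha> \<theta> \<eta> \<gamma> x0 v0 ss (Suc k)) = (\<lambda>ss. (yy ss - \<eta> k *\<^sub>R Gs \<gamma> k (yy ss) (ss (Suc k)),
      (1 / (\<mu> + \<theta> k)) *\<^sub>R (\<theta> k *\<^sub>R snd (it \<alpha> \<theta> \<eta> \<gamma> x0 v0 ss k) + \<mu> *\<^sub>R yy ss - Gs \<gamma> k (yy ss) (ss (Suc k)))))"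
    by (simp add: it_def yy_def Let_def fun_eq_iff)
  show ?case unfolding eq by measurable
qed

lemma it_meas_M:
  assumes gp: "\<And>k. \<gamma> k > 0" and xm: "\<And>i. i \<ge> 1 \<Longrightarrow> \<xi> i \<in> M \<rightarrow>\<^sub>M P"
  shows "(\<lambda>\<omega>. it \<alpha> \<theta> \<eta> \<gamma> x0 v0 (\<lambda>i. \<xi> i \<omega>) k) \<in> borel_measurable M"
proof -
  have r: "(\<lambda>\<omega>. \<lambda>i\<in>{1..k}. \<xi> i \<omega>) \<in> M \<rightarrow>\<^sub>M Pi\<^sub>M {1..k} (\<lambda>_. P)"
    using xm by (intro measurable_restrict) auto
  have "(\<lambda>\<omega>. it \<alpha> \<theta> \<eta> \<gamma> x0 v0 (\<lambda>i\<in>{1..k}. \<xi> i \<omega>) k) \<in> borel_measurable M"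
    using measurable_compose[OF r it_meas[OF gp, of k k]] by simp
  moreover have "it \<alpha> \<theta> \<eta> \<gamma> x0 v0 (\<lambda>i\<in>{1..k}. \<xi> i \<omega>) k = it \<alpha> \<theta> \<eta> \<gamma> x0 v0 (\<lambda>i. \<xi> i \<omega>) k" for \<omega>
    by (rule it_local) auto
  ultimately show ?thesis by simp
qed

end


context fsetup begin

definition "yv \<alpha> \<theta> t (p :: 'd \<times> 'd) = ansgd_y \<mu> (\<alpha> t) (\<theta> t) (fst p) (snd p)"
definition "wv \<alpha> \<theta> t x (p :: 'd \<times> 'd) = (1 - \<alpha> t) *\<^sub>R fst p + \<alpha> t *\<^sub>R x - yv \<alpha> \<theta> t p"
definition "Hm \<alpha> \<theta> \<gamma> t x p s = inner (Gs \<gamma> t (yv \<alpha> \<theta> t p) s - grad (\<lambda>z. Fobj P A U Q om g z (\<gamma> (Suc t))) (yv \<alpha> \<theta> t p)) (wv \<alpha> \<theta> t x p)"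

lemma yv_meas[measurable]: "yv \<alpha> \<theta> t \<in> borel_measurable borel"
  unfolding yv_def[abs_def] by (rule ansgd_y_meas) (auto intro: fst_borel snd_borel)

lemma wv_meas[measurable]: "wv \<alpha> \<theta> t x \<in> borel_measurable borel"
  unfolding wv_def[abs_def]
  by (intro borel_measurable_diff borel_measurable_add borel_measurable_scaleR borel_measurable_const yv_meas)
     (auto intro: fst_borel)

lemma Hm_meas:
  assumes gp: "\<gamma> (Suc t) > 0"
  shows "(\<lambda>q. Hm \<alpha> \<theta> \<gamma> t x (fst q) (snd q)) \<in> borel_measurable (borel \<Otimes>\<^sub>M P)"
proof -
  have y1: "(\<lambda>q. yv \<alpha> \<theta> t (fst q)) \<in> borel_measurable (borel \<Otimes>\<^sub>M P)" by measurable
  have w1[measurable]: "(\<lambda>q. wv \<alpha> \<theta> t x (fst q)) \<in> borel_measurable (borel \<Otimes>\<^sub>M P)" by measurable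
  have g1[measurable]: "(\<lambda>q. Gs \<gamma> t (yv \<alpha> \<theta> t (fst q)) (snd q)) \<in> borel_measurable (borel \<Otimes>\<^sub>M P)"
    by (rule Gs_meas_comp[of \<gamma> t, OF gp y1]) simp
  have g2[measurable]: "(\<lambda>q. grad (\<lambda>z. Fobj P A U Q om g z (\<gamma> (Suc t))) (yv \<alpha> \<theta> t (fst q))) \<in> borel_measurable (borel \<Otimes>\<^sub>M P)"
    using measurable_compose[OF y1 gradF_meas[OF gp]] by simp
  show ?thesis unfolding Hm_def by measurable
qed

lemma Hm_inner_zero:
  assumes gp: "\<gamma> (Suc t) > 0"
  shows "(\<integral>s. Hm \<alpha> \<theta> \<gamma> t x p s \<partial>P) = 0"
proof -
  interpret Pp: prob_space P by (rule P)
  let ?y = "yv \<alpha> \<theta> t p" and ?w = "wv \<alpha> \<theta> t x p"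
  let ?gF = "grad (\<lambda>z. Fobj P A U Q om g z (\<gamma> (Suc t))) ?y"
  have i: "integrable P (\<lambda>s. Gs \<gamma> t ?y s)" using F_unbiased(1)[OF gp] unfolding Gs_def by simp
  have e: "(\<integral>s. Gs \<gamma> t ?y s \<partial>P) = ?gF" using F_unbiased(2)[OF gp] unfolding Gs_def by simp
  have "(\<integral>s. Hm \<alpha> \<theta> \<gamma> t x p s \<partial>P) = (\<integral>s. inner (Gs \<gamma> t ?y s) ?w - inner ?gF ?w \<partial>P)"
    unfolding Hm_def by (simp add: inner_diff_left)
  also have "\<dots> = inner (\<integral>s. Gs \<gamma> t ?y s \<partial>P) ?w - inner ?gF ?w"
    using i by (simp add: integral_inner_left Pp.prob_space)
  also have "\<dots> = 0" using e by simp
  finally show ?thesis .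
qed

lemma mart_zero:
  fixes M :: "'w measure" and \<xi> :: "nat \<Rightarrow> 'w \<Rightarrow> 'b"
  assumes M: "prob_space M" and xm: "\<And>i. i \<ge> 1 \<Longrightarrow> \<xi> i \<in> M \<rightarrow>\<^sub>M P"
    and xd: "\<And>i. i \<ge> 1 \<Longrightarrow> distr M P (\<xi> i) = P"
    and xi: "prob_space.indep_vars M (\<lambda>_. P) \<xi> {1..}"
    and gp: "\<And>k. \<gamma> k > 0"
    and hint: "integrable M (\<lambda>\<omega>. Hm \<alpha> \<theta> \<gamma> t x (it \<alpha> \<theta> \<eta> \<gamma> x0 v0 (\<lambda>i. \<xi> i \<omega>) t) (\<xi> (Suc t) \<omega>))"
  shows "(\<integral>\<omega>. Hm \<alpha> \<theta> \<gamma> t x (it \<alpha> \<theta> \<eta> \<gamma> x0 v0 (\<lambda>i. \<xi> i \<omega>) t) (\<xi> (Suc t) \<omega>) \<partial>M) = 0"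
proof -
  interpret Mp: prob_space M by (rule M)
  define K where "K = case_bool {1..t} {Suc t}"
  have ind0: "Mp.indep_vars (\<lambda>j. Pi\<^sub>M (K j) (\<lambda>_. P)) (\<lambda>j \<omega>. restrict (\<lambda>i. \<xi> i \<omega>) (K j)) UNIV"
    by (rule Mp.indep_vars_restrict[OF xi]) (auto simp: K_def disjoint_family_on_def split: bool.split)
  have e1: "(\<lambda>j. Pi\<^sub>M (K j) (\<lambda>_. P)) = case_bool (Pi\<^sub>M {1..t} (\<lambda>_. P)) (Pi\<^sub>M {Suc t} (\<lambda>_. P))"
    by (auto simp: K_def fun_eq_iff split: bool.split)
  have e2: "(\<lambda>j \<omega>. restrict (\<lambda>i. \<xi> i \<omega>) (K j)) = case_bool (\<lambda>\<omega>. restrict (\<lambda>i. \<xi> i \<omega>) {1..t}) (\<lambda>\<omega>. restrict (\<lambda>i. \<xi> i \<omega>) {Suc t})"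
    by (auto simp: K_def fun_eq_iff split: bool.split)
  have ind1: "Mp.indep_var (Pi\<^sub>M {1..t} (\<lambda>_. P)) (\<lambda>\<omega>. restrict (\<lambda>i. \<xi> i \<omega>) {1..t})
                 (Pi\<^sub>M {Suc t} (\<lambda>_. P)) (\<lambda>\<omega>. restrict (\<lambda>i. \<xi> i \<omega>) {Suc t})"
    unfolding Mp.indep_var_def using ind0 unfolding e1 e2 .
  have m1: "(\<lambda>ss. it \<alpha> \<theta> \<eta> \<gamma> x0 v0 ss t) \<in> borel_measurable (Pi\<^sub>M {1..t} (\<lambda>_. P))"
    by (rule it_meas[OF gp]) simp
  have m2: "(\<lambda>f. f (Suc t)) \<in> Pi\<^sub>M {Suc t} (\<lambda>_. P) \<rightarrow>\<^sub>M P" by (rule measurable_component_singleton) simp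
  have Xm: "\<xi> (Suc t) \<in> M \<rightarrow>\<^sub>M P" by (rule xm) simp
  define R1 where "R1 \<omega> = restrict (\<lambda>i. \<xi> i \<omega>) {1..t}" for \<omega>
  define R2 where "R2 \<omega> = restrict (\<lambda>i. \<xi> i \<omega>) {Suc t}" for \<omega>
  let ?S1 = "Pi\<^sub>M {1..t} (\<lambda>_. P)" and ?S2 = "Pi\<^sub>M {Suc t} (\<lambda>_. P)"
  have R1m: "R1 \<in> M \<rightarrow>\<^sub>M ?S1" unfolding R1_def using xm by (intro measurable_restrict) auto
  have R2m: "R2 \<in> M \<rightarrow>\<^sub>M ?S2" unfolding R2_def using xm by (intro measurable_restrict) auto
  have R12m: "(\<lambda>\<omega>. (R1 \<omega>, R2 \<omega>)) \<in> M \<rightarrow>\<^sub>M ?S1 \<Otimes>\<^sub>M ?S2" using R1m R2m by (rule measurable_Pair)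
  have dist: "distr M ?S1 R1 \<Otimes>\<^sub>M distr M ?S2 R2 = distr M (?S1 \<Otimes>\<^sub>M ?S2) (\<lambda>\<omega>. (R1 \<omega>, R2 \<omega>))"
    using ind1 unfolding Mp.indep_var_distribution_eq R1_def R2_def by simp
  interpret D1: prob_space "distr M ?S1 R1" by (rule Mp.prob_space_distr[OF R1m])
  interpret D2: prob_space "distr M ?S2 R2" by (rule Mp.prob_space_distr[OF R2m])
  interpret pf: pair_sigma_finite "distr M ?S1 R1" "distr M ?S2 R2"
    unfolding pair_sigma_finite_def using prob_space_imp_sigma_finite D1.prob_space_axioms D2.prob_space_axioms by blast
  define \<Phi> where "\<Phi> q = Hm \<alpha> \<theta> \<gamma> t x (it \<alpha> \<theta> \<eta> \<gamma> x0 v0 (fst q) t) (snd q (Suc t))" for q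
  have Hm: "(\<lambda>q. Hm \<alpha> \<theta> \<gamma> t x (fst q) (snd q)) \<in> borel_measurable (borel \<Otimes>\<^sub>M P)"
    by (rule Hm_meas[OF gp])
  have Phim: "\<Phi> \<in> borel_measurable (?S1 \<Otimes>\<^sub>M ?S2)"
  proof -
    have "(\<lambda>q. (it \<alpha> \<theta> \<eta> \<gamma> x0 v0 (fst q) t, snd q (Suc t))) \<in> (?S1 \<Otimes>\<^sub>M ?S2) \<rightarrow>\<^sub>M borel \<Otimes>\<^sub>M P"
      using measurable_compose[OF measurable_fst m1] measurable_compose[OF measurable_snd m2]
      by (intro measurable_Pair) (auto simp: comp_def)
    from measurable_compose[OF this Hm] show ?thesis unfolding \<Phi>_def by simp
  qed
  have pw: "\<Phi> (R1 \<omega>, R2 \<omega>) = Hm \<alpha> \<theta> \<gamma> t x (it \<alpha> \<theta> \<eta> \<gamma> x0 v0 (\<lambda>i. \<xi> i \<omega>) t) (\<xi> (Suc t) \<omega>)" for \<omega>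
  proof -
    have "it \<alpha> \<theta> \<eta> \<gamma> x0 v0 (R1 \<omega>) t = it \<alpha> \<theta> \<eta> \<gamma> x0 v0 (\<lambda>i. \<xi> i \<omega>) t"
      unfolding R1_def by (rule it_local) auto
    then show ?thesis by (simp add: \<Phi>_def R2_def)
  qed
  have intZ: "integrable (distr M ?S1 R1 \<Otimes>\<^sub>M distr M ?S2 R2) \<Phi>"
    unfolding dist using hint by (subst integrable_distr_eq[OF R12m Phim]) (simp add: pw)
  have inner0: "(\<integral>b. \<Phi> (a, b) \<partial>distr M ?S2 R2) = 0" for a
  proof -
    let ?p = "it \<alpha> \<theta> \<eta> \<gamma> x0 v0 a t"
    have hp: "(\<lambda>s. Hm \<alpha> \<theta> \<gamma> t x ?p s) \<in> borel_measurable P"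
    proof -
      have "(\<lambda>s. (?p, s)) \<in> P \<rightarrow>\<^sub>M borel \<Otimes>\<^sub>M P" by simp
      from measurable_compose[OF this Hm] show ?thesis by simp
    qed
    have hb: "(\<lambda>b. \<Phi> (a, b)) \<in> borel_measurable ?S2"
      unfolding \<Phi>_def using measurable_compose[OF m2 hp] by (simp add: comp_def)
    have "(\<integral>b. \<Phi> (a, b) \<partial>distr M ?S2 R2) = (\<integral>\<omega>. Hm \<alpha> \<theta> \<gamma> t x ?p (\<xi> (Suc t) \<omega>) \<partial>M)"
      by (subst integral_distr[OF R2m hb]) (simp add: \<Phi>_def R2_def)
    also have "\<dots> = (\<integral>s. Hm \<alpha> \<theta> \<gamma> t x ?p s \<partial>distr M P (\<xi> (Suc t)))"
      by (subst integral_distr[OF Xm hp]) simp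
    also have "\<dots> = 0" using xd[of "Suc t"] Hm_inner_zero[OF gp] by simp
    finally show ?thesis .
  qed
  have "(\<integral>\<omega>. Hm \<alpha> \<theta> \<gamma> t x (it \<alpha> \<theta> \<eta> \<gamma> x0 v0 (\<lambda>i. \<xi> i \<omega>) t) (\<xi> (Suc t) \<omega>) \<partial>M)
        = (\<integral>\<omega>. \<Phi> (R1 \<omega>, R2 \<omega>) \<partial>M)" by (simp add: pw)
  also have "\<dots> = integral\<^sup>L (distr M (?S1 \<Otimes>\<^sub>M ?S2) (\<lambda>\<omega>. (R1 \<omega>, R2 \<omega>))) \<Phi>"
    by (subst integral_distr[OF R12m Phim]) simp
  also have "\<dots> = integral\<^sup>L (distr M ?S1 R1 \<Otimes>\<^sub>M distr M ?S2 R2) \<Phi>"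
    unfolding dist ..
  also have "\<dots> = (\<integral>a. (\<integral>b. \<Phi> (a, b) \<partial>distr M ?S2 R2) \<partial>distr M ?S1 R1)"
    using pf.integral_fst'[OF intZ] by simp
  also have "\<dots> = 0" by (simp add: inner0)
  finally show ?thesis .
qed

end


lemma xrel:
  fixes xt vt G :: "'d::real_vector"
  assumes c: "\<mu> + \<theta> > 0" and k: "\<mu> * (1 - \<alpha>) + \<theta> > 0"
  defines "y \<equiv> ansgd_y \<mu> \<alpha> \<theta> xt vt"
  shows "y - (\<alpha> / (\<mu> + \<theta>)) *\<^sub>R G = (1 - \<alpha>) *\<^sub>R xt + \<alpha> *\<^sub>R ((1 / (\<mu> + \<theta>)) *\<^sub>R (\<theta> *\<^sub>R vt + \<mu> *\<^sub>R y - G))"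
proof -
  define cc where "cc = \<mu> + \<theta>"
  define kk where "kk = \<mu> * (1 - \<alpha>) + \<theta>"
  have ky: "kk *\<^sub>R y = ((1 - \<alpha>) * cc) *\<^sub>R xt + (\<alpha> * \<theta>) *\<^sub>R vt"
    using k unfolding y_def ansgd_y_def kk_def cc_def by (simp add: scaleR_add_right)
  have "cc *\<^sub>R ((1 - \<alpha>) *\<^sub>R xt + \<alpha> *\<^sub>R ((1 / cc) *\<^sub>R (\<theta> *\<^sub>R vt + \<mu> *\<^sub>R y - G)))
        = ((1 - \<alpha>) * cc) *\<^sub>R xt + (\<alpha> * \<theta>) *\<^sub>R vt + (\<alpha> * \<mu>) *\<^sub>R y - \<alpha> *\<^sub>R G"
    using c unfolding cc_def[symmetric] by (simp add: algebra_simps)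
  also have "\<dots> = kk *\<^sub>R y + (\<alpha> * \<mu>) *\<^sub>R y - \<alpha> *\<^sub>R G" using ky by simp
  also have "\<dots> = cc *\<^sub>R y - \<alpha> *\<^sub>R G" by (simp add: kk_def cc_def algebra_simps)
  also have "\<dots> = cc *\<^sub>R (y - (\<alpha> / cc) *\<^sub>R G)"
  proof -
    have "cc * (\<alpha> / cc) = \<alpha>" using c by (simp add: cc_def)
    then show ?thesis by (simp add: scaleR_diff_right)
  qed
  finally have "cc *\<^sub>R ((1 - \<alpha>) *\<^sub>R xt + \<alpha> *\<^sub>R ((1 / cc) *\<^sub>R (\<theta> *\<^sub>R vt + \<mu> *\<^sub>R y - G))) = cc *\<^sub>R (y - (\<alpha> / cc) *\<^sub>R G)" .
  then have "(1 - \<alpha>) *\<^sub>R xt + \<alpha> *\<^sub>R ((1 / cc) *\<^sub>R (\<theta> *\<^sub>R vt + \<mu> *\<^sub>R y - G)) = y - (\<alpha> / cc) *\<^sub>R G"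
    by (rule scaleR_left_imp_eq[rotated]) (use c in \<open>simp add: cc_def\<close>)
  then show ?thesis unfolding cc_def by simp
qed

lemma final_arith:
  fixes E1 E0' E0 Fx Fx' a b d e D0 D1 S2 SS G :: real
  assumes "E1 \<le> (1 - a) * E0' + a * Fx' + b * D0 - d * D1 + e * S2 + 0"
    and "(1 - a) * E0' \<le> (1 - a) * (E0 + G)" and "(1 - a) * Fx \<le> (1 - a) * Fx'" and "e * S2 \<le> e * SS"
  shows "E1 - Fx' \<le> (1 - a) * (E0 - Fx) + b * D0 - d * D1 + e * SS + (1 - a) * G"
proof -
  have "a * Fx' - Fx' = - ((1 - a) * Fx')" by algebra
  moreover have "(1 - a) * (E0 - Fx) + (1 - a) * G = (1 - a) * (E0 + G) - (1 - a) * Fx" by algebra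
  ultimately show ?thesis using assms by linarith
qed

lemma sq_conv:
  fixes u v :: "'a::real_inner"
  assumes "0 \<le> a" "a \<le> 1"
  shows "(norm ((1 - a) *\<^sub>R u + a *\<^sub>R v))\<^sup>2 \<le> (1 - a) * (norm u)\<^sup>2 + a * (norm v)\<^sup>2"
proof -
  have "(1 - a) * (norm u)\<^sup>2 + a * (norm v)\<^sup>2 - (norm ((1 - a) *\<^sub>R u + a *\<^sub>R v))\<^sup>2 = a * (1 - a) * (norm (u - v))\<^sup>2"
    by (simp add: power2_norm_eq_inner inner_add_left inner_add_right inner_diff_left inner_diff_right
        inner_commute[of v u] algebra_simps)
  moreover have "0 \<le> a * (1 - a) * (norm (u - v))\<^sup>2" using assms by simp
  ultimately show ?thesis by linarith
qed

lemma sq_two: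
  fixes u v :: "'a::real_inner"
  shows "(norm (p *\<^sub>R u + q *\<^sub>R v))\<^sup>2 \<le> 2 * p\<^sup>2 * (norm u)\<^sup>2 + 2 * q\<^sup>2 * (norm v)\<^sup>2"
proof -
  have "2 * p\<^sup>2 * (norm u)\<^sup>2 + 2 * q\<^sup>2 * (norm v)\<^sup>2 - (norm (p *\<^sub>R u + q *\<^sub>R v))\<^sup>2 = (norm (p *\<^sub>R u - q *\<^sub>R v))\<^sup>2"
    by (simp add: power2_norm_eq_inner inner_add_left inner_add_right inner_diff_left inner_diff_right
        inner_commute[of v u] algebra_simps) (simp add: power2_eq_square)
  then show ?thesis by (smt (verit) zero_le_power2)
qed

lemma w_decomp:
  fixes xt vt x :: "'d::real_vector"
  assumes k: "\<mu> * (1 - \<alpha>) + \<theta> > 0"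
  shows "(1 - \<alpha>) *\<^sub>R xt + \<alpha> *\<^sub>R x - ansgd_y \<mu> \<alpha> \<theta> xt vt
     = (1 - \<alpha> - (1 - \<alpha>) * (\<mu> + \<theta>) / (\<mu> * (1 - \<alpha>) + \<theta>)) *\<^sub>R (xt - x)
       + (- (\<alpha> * \<theta> / (\<mu> * (1 - \<alpha>) + \<theta>))) *\<^sub>R (vt - x)"
proof -
  define kk where "kk = \<mu> * (1 - \<alpha>) + \<theta>"
  have kk0: "kk \<noteq> 0" using k by (simp add: kk_def)
  have y: "ansgd_y \<mu> \<alpha> \<theta> xt vt = ((1 - \<alpha>) * (\<mu> + \<theta>) / kk) *\<^sub>R xt + (\<alpha> * \<theta> / kk) *\<^sub>R vt"
    unfolding ansgd_y_def kk_def by simp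
  have s0: "(1 - \<alpha>) * (\<mu> + \<theta>) + \<alpha> * \<theta> = kk" by (simp add: kk_def algebra_simps)
  have s: "(1 - \<alpha>) * (\<mu> + \<theta>) / kk + \<alpha> * \<theta> / kk = 1" using kk0
    by (simp add: add_divide_distrib[symmetric] s0)
  have "(1 - \<alpha>) *\<^sub>R xt + \<alpha> *\<^sub>R x - ansgd_y \<mu> \<alpha> \<theta> xt vt
     - ((1 - \<alpha> - (1 - \<alpha>) * (\<mu> + \<theta>) / kk) *\<^sub>R (xt - x) + (- (\<alpha> * \<theta> / kk)) *\<^sub>R (vt - x))
     = (1 - ((1 - \<alpha>) * (\<mu> + \<theta>) / kk + \<alpha> * \<theta> / kk)) *\<^sub>R x"
    unfolding y by (simp add: algebra_simps)
  also have "\<dots> = 0" using s by simp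
  finally show ?thesis unfolding kk_def by simp
qed



theorem lemma5:
  fixes M :: "'w measure" and P :: "'b measure" and \<xi> :: "nat \<Rightarrow> 'w \<Rightarrow> 'b"
    and A :: "'b \<Rightarrow> 'd::euclidean_space \<Rightarrow> 'm::euclidean_space"
    and U :: "'m set" and Q :: "'m \<Rightarrow> real" and om :: "'m \<Rightarrow> real"
    and \<zeta> DU :: real
    and g :: "'d \<Rightarrow> 'b \<Rightarrow> real" and Lg \<mu> :: real
    and \<gamma> \<eta> \<theta> \<alpha> :: "nat \<Rightarrow> real"
    and x0 v0 x :: 'd and t :: nat
  defines "gbar \<equiv> \<lambda>z. \<integral>s. g z s \<partial>P"
    and "X \<equiv> \<lambda>\<omega> k. fst (ansgd \<mu> \<alpha> \<theta> \<eta> (sgrad A U Q om g \<gamma> \<xi> \<omega>) x0 v0 k)"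
    and "V \<equiv> \<lambda>\<omega> k. snd (ansgd \<mu> \<alpha> \<theta> \<eta> (sgrad A U Q om g \<gamma> \<xi> \<omega>) x0 v0 k)"
    and "EL \<equiv> \<lambda>k. Lg + (\<integral>\<omega>. (opnorm (A (\<xi> k \<omega>)))\<^sup>2 / (\<gamma> k * \<zeta>) \<partial>M)"
    and "sig \<equiv> \<lambda>\<omega> k.
           (let y = ansgd_y \<mu> (\<alpha> k) (\<theta> k) (fst (ansgd \<mu> \<alpha> \<theta> \<eta> (sgrad A U Q om g \<gamma> \<xi> \<omega>) x0 v0 k))
                                         (snd (ansgd \<mu> \<alpha> \<theta> \<eta> (sgrad A U Q om g \<gamma> \<xi> \<omega>) x0 v0 k))
            in sgrad A U Q om g \<gamma> \<xi> \<omega> k y - grad (\<lambda>z. Fobj P A U Q om g z (\<gamma> (Suc k))) y)"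
    and "EDelta \<equiv> \<lambda>k. (\<integral>\<omega>. Fobj P A U Q om g (fst (ansgd \<mu> \<alpha> \<theta> \<eta> (sgrad A U Q om g \<gamma> \<xi> \<omega>) x0 v0 k)) (\<gamma> k) \<partial>M)
                      - Fobj P A U Q om g x (\<gamma> k)"
    and "Dsq \<equiv> \<lambda>k. 1 / 2 * (\<integral>\<omega>. (norm (x - snd (ansgd \<mu> \<alpha> \<theta> \<eta> (sgrad A U Q om g \<gamma> \<xi> \<omega>) x0 v0 k)))\<^sup>2 \<partial>M)"
  assumes M: "prob_space M" and P: "prob_space P"
    and xi_meas: "\<And>i. i \<ge> 1 \<Longrightarrow> \<xi> i \<in> M \<rightarrow>\<^sub>M P"
    and xi_distr: "\<And>i. i \<ge> 1 \<Longrightarrow> distr M P (\<xi> i) = P"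
    and xi_indep: "prob_space.indep_vars M (\<lambda>_. P) \<xi> {1..}"
    (* the dual set, Q and the prox-function om *)
    and U_convex: "convex U" and U_ne: "U \<noteq> {}"
    and Q_cont: "continuous_on U Q" and Q_convex: "convex_on U Q"
    and om_nonneg: "\<And>u. u \<in> U \<Longrightarrow> 0 \<le> om u"
    and zeta_pos: "\<zeta> > 0" and om_sc: "strongly_convex_on U om \<zeta>"
    and om_bdd: "bdd_above (om ` U)" and DU_def: "DU = Sup (om ` U)"
    and A_lin: "\<And>s. linear (A s)"
    and A_sq_int: "integrable P (\<lambda>s. (opnorm (A s))\<^sup>2)"
    (* the regularizer g *)
    and g_diff: "\<And>z s. (\<lambda>z. g z s) differentiable (at z)"
    and g_int: "\<And>z. integrable P (g z)"
    and g_meas: "(\<lambda>p. g (fst p) (snd p)) \<in> borel_measurable (borel \<Otimes>\<^sub>M P)"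
    and g_grad_meas: "(\<lambda>p. grad (\<lambda>z. g z (snd p)) (fst p)) \<in> borel_measurable (borel \<Otimes>\<^sub>M P)"
    and g_grad_unbiased: "\<And>z. integrable P (\<lambda>s. grad (\<lambda>z. g z s) z)
                               \<and> (\<integral>s. grad (\<lambda>z. g z s) z \<partial>P) = grad gbar z"
    and gbar_diff: "\<And>z. gbar differentiable (at z)"
    and gbar_convex: "convex_on UNIV gbar"
    and gbar_smooth: "\<And>x y. gbar x \<le> gbar y + inner (grad gbar y) (x - y) + Lg / 2 * (norm (x - y))\<^sup>2"
    and mu_nonneg: "\<mu> \<ge> 0"
    and gbar_sc: "\<And>x y. gbar x \<ge> gbar y + inner (grad gbar y) (x - y) + \<mu> / 2 * (norm (x - y))\<^sup>2"
    (* regularity of the smoothed loss *)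
    and fhat_int: "\<And>z c. c > 0 \<Longrightarrow> integrable P (fhat A U Q om c z)"
    and fhat_meas: "\<And>c. c > 0 \<Longrightarrow>
          (\<lambda>p. fhat A U Q om c (fst p) (snd p)) \<in> borel_measurable (borel \<Otimes>\<^sub>M P)"
    and fhat_grad_meas: "\<And>c. c > 0 \<Longrightarrow>
          (\<lambda>p. grad (\<lambda>z. fhat A U Q om c z (snd p)) (fst p)) \<in> borel_measurable (borel \<Otimes>\<^sub>M P)"
    (* finiteness of the expectations occurring in the statement *)
    and Delta_int: "\<And>k. integrable M (\<lambda>\<omega>. Fobj P A U Q om g (X \<omega> k) (\<gamma> k))"
    and D_int: "\<And>k. integrable M (\<lambda>\<omega>. (norm (x - V \<omega> k))\<^sup>2)"
    and sig_bdd: "\<And>\<omega>. bdd_above (range (\<lambda>k. (norm (sig \<omega> k))\<^sup>2))"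
    and sig_int: "integrable M (\<lambda>\<omega>. SUP k. (norm (sig \<omega> k))\<^sup>2)"
    (* parameters *)
    and gamma_pos: "\<And>k. \<gamma> k > 0"
    and gamma_mono: "\<And>k. \<gamma> (Suc k) \<le> \<gamma> k"
    and theta_nonneg: "\<And>k. \<theta> k \<ge> 0"
    and alpha_range: "\<And>k. 0 \<le> \<alpha> k \<and> \<alpha> k \<le> 1"
    and eta_def: "\<And>k. \<eta> k = \<alpha> k / (\<mu> + \<theta> k)"
    and step_cond: "\<And>k. \<mu> + \<theta> k - \<alpha> k * EL (Suc k) > 0"
  shows "EDelta (Suc t) \<le> (1 - \<alpha> t) * EDelta t + \<alpha> t * \<theta> t * Dsq t
           - \<alpha> t * (\<mu> + \<theta> t) * Dsq (Suc t)
           + \<alpha> t / (2 * (\<mu> + \<theta> t - \<alpha> t * EL (Suc t))) * (\<integral>\<omega>. (SUP k. (norm (sig \<omega> k))\<^sup>2) \<partial>M)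
           + (1 - \<alpha> t) * (\<gamma> t - \<gamma> (Suc t)) * DU"
proof -
  obtain R where R: "\<forall>u\<in>U. norm u \<le> R"
    using U_bounded[OF U_convex U_ne om_nonneg zeta_pos om_sc om_bdd] by blast
  obtain B where B: "\<forall>u\<in>U. B \<le> Q u"
    using Q_bdd_below[OF U_convex U_ne Q_cont Q_convex R] by blast
  have gu: "\<And>z. integrable P (\<lambda>s. grad (\<lambda>z. g z s) z)
                               \<and> (\<integral>s. grad (\<lambda>z. g z s) z \<partial>P) = grad (\<lambda>z. \<integral>s. g z s \<partial>P) z"
    using g_grad_unbiased unfolding gbar_def .
  have gd: "\<And>z. (\<lambda>z. \<integral>s. g z s \<partial>P) differentiable (at z)" using gbar_diff unfolding gbar_def .
  have gs1: "\<And>x y. (\<integral>s. g x s \<partial>P) \<le> (\<integral>s. g y s \<partial>P) + inner (grad (\<lambda>z. \<integral>s. g z s \<partial>P) y) (x - y) + Lg / 2 * (norm (x - y))\<^sup>2"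
    using gbar_smooth unfolding gbar_def by simp
  have gs2: "\<And>x y. (\<integral>s. g x s \<partial>P) \<ge> (\<integral>s. g y s \<partial>P) + inner (grad (\<lambda>z. \<integral>s. g z s \<partial>P) y) (x - y) + \<mu> / 2 * (norm (x - y))\<^sup>2"
    using gbar_sc unfolding gbar_def by simp
  interpret fs: fsetup P A U Q om \<zeta> R B DU g Lg \<mu>
    by (rule fsetup.intro[OF P U_convex U_ne Q_convex om_nonneg zeta_pos om_sc om_bdd DU_def A_lin A_sq_int
          R B g_int g_grad_meas gu gd gs1 gs2 fhat_int fhat_grad_meas])
  interpret Mp: prob_space M by (rule M)
  have Lmu: "\<mu> \<le> Lg" by (rule fs.Lg_ge_mu)
  have EL_ge: "Lg \<le> EL k" for k
  proof -
    have "0 \<le> (\<integral>\<omega>. (opnorm (A (\<xi> k \<omega>)))\<^sup>2 / (\<gamma> k * \<zeta>) \<partial>M)"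
      using gamma_pos[of k] zeta_pos by (intro integral_nonneg_AE AE_I2) simp
    then show ?thesis unfolding EL_def by simp
  qed
  have ck: "0 < \<mu> + \<theta> k" and kk: "0 < \<mu> * (1 - \<alpha> k) + \<theta> k" for k
  proof -
    have "\<alpha> k * \<mu> \<le> \<alpha> k * EL (Suc k)" using alpha_range[of k] Lmu EL_ge[of "Suc k"]
      by (intro mult_left_mono) auto
    moreover have "0 \<le> \<alpha> k * \<mu>" using alpha_range[of k] mu_nonneg by simp
    ultimately show "0 < \<mu> + \<theta> k" "0 < \<mu> * (1 - \<alpha> k) + \<theta> k" using step_cond[of k]
      by (auto simp: algebra_simps)
  qed
  have XV: "ansgd \<mu> \<alpha> \<theta> \<eta> (sgrad A U Q om g \<gamma> \<xi> \<omega>) x0 v0 k = fs.it \<alpha> \<theta> \<eta> \<gamma> x0 v0 (\<lambda>i. \<xi> i \<omega>) k" for \<omega> k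
    by (simp add: fs.it_def fs.sgrad_eq)
  have Xit: "X \<omega> k = fst (fs.it \<alpha> \<theta> \<eta> \<gamma> x0 v0 (\<lambda>i. \<xi> i \<omega>) k)" for \<omega> k by (simp add: X_def XV)
  have Vit: "V \<omega> k = snd (fs.it \<alpha> \<theta> \<eta> \<gamma> x0 v0 (\<lambda>i. \<xi> i \<omega>) k)" for \<omega> k by (simp add: V_def XV)
  have itm: "(\<lambda>\<omega>. fs.it \<alpha> \<theta> \<eta> \<gamma> x0 v0 (\<lambda>i. \<xi> i \<omega>) k) \<in> borel_measurable M" for k
    by (rule fs.it_meas_M[OF gamma_pos xi_meas])
  have Xm: "(\<lambda>\<omega>. X \<omega> k) \<in> borel_measurable M" for k
    unfolding Xit using measurable_compose[OF itm fst_borel] by simp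
  have Vm: "(\<lambda>\<omega>. V \<omega> k) \<in> borel_measurable M" for k
    unfolding Vit using measurable_compose[OF itm snd_borel] by simp
  have stepX: "X \<omega> (Suc k) = ansgd_y \<mu> (\<alpha> k) (\<theta> k) (X \<omega> k) (V \<omega> k)
      - \<eta> k *\<^sub>R sgrad A U Q om g \<gamma> \<xi> \<omega> k (ansgd_y \<mu> (\<alpha> k) (\<theta> k) (X \<omega> k) (V \<omega> k))" for \<omega> k
    by (simp add: X_def V_def Let_def)
  have stepV: "V \<omega> (Suc k) = (1 / (\<mu> + \<theta> k)) *\<^sub>R (\<theta> k *\<^sub>R V \<omega> k + \<mu> *\<^sub>R ansgd_y \<mu> (\<alpha> k) (\<theta> k) (X \<omega> k) (V \<omega> k)
      - sgrad A U Q om g \<gamma> \<xi> \<omega> k (ansgd_y \<mu> (\<alpha> k) (\<theta> k) (X \<omega> k) (V \<omega> k)))" for \<omega> k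
    by (simp add: X_def V_def Let_def)
  have X2: "integrable M (\<lambda>\<omega>. (norm (x - X \<omega> k))\<^sup>2)" for k
  proof (induction k)
    case 0
    have "X \<omega> 0 = x0" for \<omega> by (simp add: X_def)
    then show ?case by simp
  next
    case (Suc k)
    have pw: "(norm (x - X \<omega> (Suc k)))\<^sup>2 \<le> (1 - \<alpha> k) * (norm (x - X \<omega> k))\<^sup>2 + \<alpha> k * (norm (x - V \<omega> (Suc k)))\<^sup>2" for \<omega>
    proof -
      have "X \<omega> (Suc k) = (1 - \<alpha> k) *\<^sub>R X \<omega> k + \<alpha> k *\<^sub>R V \<omega> (Suc k)"
        unfolding stepX stepV eta_def using xrel[OF ck kk] by simp
      then have "x - X \<omega> (Suc k) = (1 - \<alpha> k) *\<^sub>R (x - X \<omega> k) + \<alpha> k *\<^sub>R (x - V \<omega> (Suc k))"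
        by (simp add: algebra_simps)
      then show ?thesis using sq_conv[of "\<alpha> k" "x - X \<omega> k" "x - V \<omega> (Suc k)"] alpha_range[of k] by simp
    qed
    show ?case
    proof (rule Bochner_Integration.integrable_bound)
      show "integrable M (\<lambda>\<omega>. (1 - \<alpha> k) * (norm (x - X \<omega> k))\<^sup>2 + \<alpha> k * (norm (x - V \<omega> (Suc k)))\<^sup>2)"
        using Suc D_int by simp
      show "(\<lambda>\<omega>. (norm (x - X \<omega> (Suc k)))\<^sup>2) \<in> borel_measurable M" using Xm by measurable
      show "AE \<omega> in M. norm ((norm (x - X \<omega> (Suc k)))\<^sup>2) \<le> norm ((1 - \<alpha> k) * (norm (x - X \<omega> k))\<^sup>2 + \<alpha> k * (norm (x - V \<omega> (Suc k)))\<^sup>2)"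
      proof (rule AE_I2)
        fix \<omega>
        have "0 \<le> (1 - \<alpha> k) * (norm (x - X \<omega> k))\<^sup>2 + \<alpha> k * (norm (x - V \<omega> (Suc k)))\<^sup>2"
          using alpha_range[of k] by simp
        then show "norm ((norm (x - X \<omega> (Suc k)))\<^sup>2) \<le> norm ((1 - \<alpha> k) * (norm (x - X \<omega> k))\<^sup>2 + \<alpha> k * (norm (x - V \<omega> (Suc k)))\<^sup>2)"
          using pw[of \<omega>] by simp
      qed
    qed
  qed
  define gp where "gp = \<gamma> (Suc t)"
  have gp0: "gp > 0" using gamma_pos by (simp add: gp_def)
  define Fn where "Fn z = Fobj P A U Q om g z gp" for z
  have FnE: "Fn = (\<lambda>z. Fobj P A U Q om g z gp)" by (simp add: Fn_def fun_eq_iff)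
  define L where "L = Lg + fs.K2 / (gp * \<zeta>)"
  have ELt: "EL (Suc t) = L"
  proof -
    have fm: "(\<lambda>s. (opnorm (A s))\<^sup>2 / (gp * \<zeta>)) \<in> borel_measurable P" using A_sq_int by measurable
    have "(\<integral>\<omega>. (opnorm (A (\<xi> (Suc t) \<omega>)))\<^sup>2 / (gp * \<zeta>) \<partial>M) = (\<integral>s. (opnorm (A s))\<^sup>2 / (gp * \<zeta>) \<partial>distr M P (\<xi> (Suc t)))"
      by (subst integral_distr[OF xi_meas fm]) auto
    also have "\<dots> = fs.K2 / (gp * \<zeta>)" using xi_distr[of "Suc t"] by (simp add: fs.K2_def)
    finally show ?thesis unfolding EL_def L_def gp_def by simp
  qed
  have cL: "\<mu> + \<theta> t - \<alpha> t * L > 0" using step_cond[of t] ELt by simp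
  have LmuL: "\<mu> \<le> L"
  proof -
    have "0 \<le> fs.K2 / (gp * \<zeta>)" using fs.K2_nonneg gp0 zeta_pos by simp
    then show ?thesis using Lmu by (simp add: L_def)
  qed
  define yy where "yy \<omega> = ansgd_y \<mu> (\<alpha> t) (\<theta> t) (X \<omega> t) (V \<omega> t)" for \<omega>
  define GG where "GG \<omega> = sgrad A U Q om g \<gamma> \<xi> \<omega> t (yy \<omega>)" for \<omega>
  define ww where "ww \<omega> = (1 - \<alpha> t) *\<^sub>R X \<omega> t + \<alpha> t *\<^sub>R x - yy \<omega>" for \<omega>
  define HH where "HH \<omega> = fs.Hm \<alpha> \<theta> \<gamma> t x (fs.it \<alpha> \<theta> \<eta> \<gamma> x0 v0 (\<lambda>i. \<xi> i \<omega>) t) (\<xi> (Suc t) \<omega>)" for \<omega>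
  have sig_eq: "sig \<omega> t = GG \<omega> - grad Fn (yy \<omega>)" for \<omega>
    by (simp add: sig_def GG_def yy_def FnE gp_def X_def V_def Let_def)
  have HH_eq: "HH \<omega> = inner (sig \<omega> t) (ww \<omega>)" for \<omega>
    unfolding HH_def fs.Hm_def fs.yv_def fs.wv_def sig_eq ww_def GG_def yy_def Xit Vit fs.sgrad_eq gp_def FnE
    by simp
  have yym: "yy \<in> borel_measurable M" unfolding yy_def[abs_def] by (rule fs.ansgd_y_meas[OF Xm Vm])
  have GGm: "GG \<in> borel_measurable M"
  proof -
    have "(\<lambda>\<omega>. fs.Gs \<gamma> t (yy \<omega>) (\<xi> (Suc t) \<omega>)) \<in> borel_measurable M"
      by (rule fs.Gs_meas_comp[of \<gamma> t, OF gamma_pos yym xi_meas]) simp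
    then show ?thesis unfolding GG_def[abs_def] fs.sgrad_eq by simp
  qed
  have gFm: "(\<lambda>\<omega>. grad Fn (yy \<omega>)) \<in> borel_measurable M"
    using measurable_compose[OF yym fs.gradF_meas[OF gp0]] unfolding FnE by simp
  have sigm: "(\<lambda>\<omega>. sig \<omega> t) \<in> borel_measurable M" unfolding sig_eq using GGm gFm by measurable
  have wwm: "ww \<in> borel_measurable M" unfolding ww_def[abs_def] using Xm yym by measurable
  have Fnm: "Fn \<in> borel_measurable borel" unfolding FnE by (rule fs.F_meas[OF gp0])
  have PW: "Fn (X \<omega> (Suc t)) \<le> (1 - \<alpha> t) * Fn (X \<omega> t) + \<alpha> t * Fn x + \<alpha> t * \<theta> t / 2 * (norm (x - V \<omega> t))\<^sup>2
       - \<alpha> t * (\<mu> + \<theta> t) / 2 * (norm (x - V \<omega> (Suc t)))\<^sup>2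
       + \<alpha> t / (2 * (\<mu> + \<theta> t - \<alpha> t * L)) * (norm (sig \<omega> t))\<^sup>2 + HH \<omega>" for \<omega>
  proof -
    have S: "\<And>a b. Fn a \<le> Fn b + inner (grad Fn b) (a - b) + L / 2 * (norm (a - b))\<^sup>2"
      unfolding FnE L_def using fs.F_smooth[OF gp0] by simp
    have C: "\<And>a b. Fn b + inner (grad Fn b) (a - b) + \<mu> / 2 * (norm (a - b))\<^sup>2 \<le> Fn a"
      unfolding FnE using fs.F_sc[OF gp0] by simp
    have X1: "X \<omega> (Suc t) = yy \<omega> - (\<alpha> t / (\<mu> + \<theta> t)) *\<^sub>R GG \<omega>"
      unfolding stepX eta_def yy_def GG_def ..
    have V1: "V \<omega> (Suc t) = (1 / (\<mu> + \<theta> t)) *\<^sub>R (\<theta> t *\<^sub>R V \<omega> t + \<mu> *\<^sub>R yy \<omega> - GG \<omega>)"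
      unfolding stepV yy_def GG_def ..
    show ?thesis
      using step_ineq[OF S C mu_nonneg theta_nonneg[of t] _ _ cL LmuL, of "X \<omega> t" "V \<omega> t" "GG \<omega>" x] alpha_range[of t]
      unfolding X1 V1 HH_eq sig_eq ww_def yy_def[symmetric] by simp
  qed
  have iF1: "integrable M (\<lambda>\<omega>. Fn (X \<omega> (Suc t)))" using Delta_int[of "Suc t"] by (simp add: FnE gp_def)
  have Fg: "Fobj P A U Q om g z (\<gamma> t) \<le> Fn z" "Fn z \<le> Fobj P A U Q om g z (\<gamma> t) + (\<gamma> t - gp) * DU" for z
    using fs.F_gamma[OF gp0 gamma_mono[of t, folded gp_def]] by (auto simp: FnE)
  have iF0: "integrable M (\<lambda>\<omega>. Fn (X \<omega> t))"
  proof (rule Bochner_Integration.integrable_bound)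
    show "integrable M (\<lambda>\<omega>. \<bar>Fobj P A U Q om g (X \<omega> t) (\<gamma> t)\<bar> + \<bar>(\<gamma> t - gp) * DU\<bar>)"
      using Delta_int[of t] by simp
    show "(\<lambda>\<omega>. Fn (X \<omega> t)) \<in> borel_measurable M" using measurable_compose[OF Xm Fnm] by simp
    show "AE \<omega> in M. norm (Fn (X \<omega> t)) \<le> norm (\<bar>Fobj P A U Q om g (X \<omega> t) (\<gamma> t)\<bar> + \<bar>(\<gamma> t - gp) * DU\<bar>)"
      using Fg by (intro AE_I2) (smt (verit) real_norm_def)
  qed
  have sig_le: "(norm (sig \<omega> t))\<^sup>2 \<le> (SUP k. (norm (sig \<omega> k))\<^sup>2)" for \<omega>
    using sig_bdd[of \<omega>] by (intro cSUP_upper) auto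
  have iS: "integrable M (\<lambda>\<omega>. (norm (sig \<omega> t))\<^sup>2)"
  proof (rule Bochner_Integration.integrable_bound[OF sig_int])
    show "(\<lambda>\<omega>. (norm (sig \<omega> t))\<^sup>2) \<in> borel_measurable M" using sigm by measurable
    show "AE \<omega> in M. norm ((norm (sig \<omega> t))\<^sup>2) \<le> norm (SUP k. (norm (sig \<omega> k))\<^sup>2)"
    proof (rule AE_I2)
      fix \<omega> show "norm ((norm (sig \<omega> t))\<^sup>2) \<le> norm (SUP k. (norm (sig \<omega> k))\<^sup>2)"
        using sig_le[of \<omega>] by simp
    qed
  qed
  define pp where "pp = 1 - \<alpha> t - (1 - \<alpha> t) * (\<mu> + \<theta> t) / (\<mu> * (1 - \<alpha> t) + \<theta> t)"
  define qq where "qq = - (\<alpha> t * \<theta> t / (\<mu> * (1 - \<alpha> t) + \<theta> t))"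
  have ww_le: "(norm (ww \<omega>))\<^sup>2 \<le> 2 * pp\<^sup>2 * (norm (x - X \<omega> t))\<^sup>2 + 2 * qq\<^sup>2 * (norm (x - V \<omega> t))\<^sup>2" for \<omega>
  proof -
    have "ww \<omega> = pp *\<^sub>R (X \<omega> t - x) + qq *\<^sub>R (V \<omega> t - x)"
      unfolding ww_def yy_def pp_def qq_def by (rule w_decomp[OF kk])
    then show ?thesis using sq_two[of pp "X \<omega> t - x" qq "V \<omega> t - x"] by (simp add: norm_minus_commute)
  qed
  have iH: "integrable M HH"
  proof (rule Bochner_Integration.integrable_bound)
    show "integrable M (\<lambda>\<omega>. (norm (sig \<omega> t))\<^sup>2 / 2 + (2 * pp\<^sup>2 * (norm (x - X \<omega> t))\<^sup>2 + 2 * qq\<^sup>2 * (norm (x - V \<omega> t))\<^sup>2) / 2)"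
      using iS X2[of t] D_int[of t] by simp
    show "HH \<in> borel_measurable M" unfolding HH_eq[abs_def] using sigm wwm by measurable
    show "AE \<omega> in M. norm (HH \<omega>) \<le> norm ((norm (sig \<omega> t))\<^sup>2 / 2 + (2 * pp\<^sup>2 * (norm (x - X \<omega> t))\<^sup>2 + 2 * qq\<^sup>2 * (norm (x - V \<omega> t))\<^sup>2) / 2)"
    proof (rule AE_I2)
      fix \<omega>
      have y1: "inner (sig \<omega> t) (ww \<omega>) \<le> 1 / 2 * (norm (ww \<omega>))\<^sup>2 + (norm (sig \<omega> t))\<^sup>2 / (2 * 1)"
        by (rule young_inner) simp
      have y2: "inner (- sig \<omega> t) (ww \<omega>) \<le> 1 / 2 * (norm (ww \<omega>))\<^sup>2 + (norm (- sig \<omega> t))\<^sup>2 / (2 * 1)"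
        by (rule young_inner) simp
      have "\<bar>HH \<omega>\<bar> \<le> (norm (sig \<omega> t))\<^sup>2 / 2 + (norm (ww \<omega>))\<^sup>2 / 2"
        unfolding HH_eq using y1 y2 by (simp add: abs_le_iff)
      also have "\<dots> \<le> (norm (sig \<omega> t))\<^sup>2 / 2 + (2 * pp\<^sup>2 * (norm (x - X \<omega> t))\<^sup>2 + 2 * qq\<^sup>2 * (norm (x - V \<omega> t))\<^sup>2) / 2"
        using ww_le[of \<omega>] by simp
      finally show "norm (HH \<omega>) \<le> norm ((norm (sig \<omega> t))\<^sup>2 / 2 + (2 * pp\<^sup>2 * (norm (x - X \<omega> t))\<^sup>2 + 2 * qq\<^sup>2 * (norm (x - V \<omega> t))\<^sup>2) / 2)"
        by simp
    qed
  qed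
  have H0: "(\<integral>\<omega>. HH \<omega> \<partial>M) = 0"
    unfolding HH_def by (rule fs.mart_zero[OF M xi_meas xi_distr xi_indep gamma_pos iH[unfolded HH_def]])
  define coef where "coef = \<alpha> t / (2 * (\<mu> + \<theta> t - \<alpha> t * L))"
  have coef0: "0 \<le> coef" using cL alpha_range[of t] by (simp add: coef_def)
  define RHS where "RHS \<omega> = (1 - \<alpha> t) * Fn (X \<omega> t) + \<alpha> t * Fn x + \<alpha> t * \<theta> t / 2 * (norm (x - V \<omega> t))\<^sup>2
       - \<alpha> t * (\<mu> + \<theta> t) / 2 * (norm (x - V \<omega> (Suc t)))\<^sup>2 + coef * (norm (sig \<omega> t))\<^sup>2 + HH \<omega>" for \<omega>
  have iR: "integrable M RHS" unfolding RHS_def[abs_def] using iF0 D_int iS iH by simp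
  have m0: "(\<integral>\<omega>. Fn (X \<omega> (Suc t)) \<partial>M) \<le> (\<integral>\<omega>. RHS \<omega> \<partial>M)"
    by (rule integral_mono[OF iF1 iR]) (use PW in \<open>simp add: RHS_def coef_def\<close>)
  have m1: "(\<integral>\<omega>. RHS \<omega> \<partial>M) = (1 - \<alpha> t) * (\<integral>\<omega>. Fn (X \<omega> t) \<partial>M) + \<alpha> t * Fn x
      + \<alpha> t * \<theta> t * (1 / 2 * (\<integral>\<omega>. (norm (x - V \<omega> t))\<^sup>2 \<partial>M))
      - \<alpha> t * (\<mu> + \<theta> t) * (1 / 2 * (\<integral>\<omega>. (norm (x - V \<omega> (Suc t)))\<^sup>2 \<partial>M))
      + coef * (\<integral>\<omega>. (norm (sig \<omega> t))\<^sup>2 \<partial>M) + 0"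
    unfolding RHS_def H0[symmetric] using iF0 D_int iS iH by (simp add: Mp.prob_space)
  have g1: "(1 - \<alpha> t) * (\<integral>\<omega>. Fn (X \<omega> t) \<partial>M)
      \<le> (1 - \<alpha> t) * ((\<integral>\<omega>. Fobj P A U Q om g (X \<omega> t) (\<gamma> t) \<partial>M) + (\<gamma> t - gp) * DU)"
  proof -
    have "(\<integral>\<omega>. Fn (X \<omega> t) \<partial>M) \<le> (\<integral>\<omega>. Fobj P A U Q om g (X \<omega> t) (\<gamma> t) + (\<gamma> t - gp) * DU \<partial>M)"
      using Fg(2) Delta_int[of t] by (intro integral_mono[OF iF0]) auto
    also have "\<dots> = (\<integral>\<omega>. Fobj P A U Q om g (X \<omega> t) (\<gamma> t) \<partial>M) + (\<gamma> t - gp) * DU"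
      using Delta_int[of t] by (simp add: Mp.prob_space)
    finally show ?thesis using alpha_range[of t] by (intro mult_left_mono) auto
  qed
  have g2: "(1 - \<alpha> t) * Fobj P A U Q om g x (\<gamma> t) \<le> (1 - \<alpha> t) * Fn x"
    using Fg(1)[of x] alpha_range[of t] by (intro mult_left_mono) auto
  have g3: "coef * (\<integral>\<omega>. (norm (sig \<omega> t))\<^sup>2 \<partial>M) \<le> coef * (\<integral>\<omega>. (SUP k. (norm (sig \<omega> k))\<^sup>2) \<partial>M)"
    using coef0 sig_le by (intro mult_left_mono integral_mono[OF iS sig_int]) auto
  have fin: "(\<integral>\<omega>. Fn (X \<omega> (Suc t)) \<partial>M) - Fn x \<le> (1 - \<alpha> t) * ((\<integral>\<omega>. Fobj P A U Q om g (X \<omega> t) (\<gamma> t) \<partial>M) - Fobj P A U Q om g x (\<gamma> t))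
      + \<alpha> t * \<theta> t * (1 / 2 * (\<integral>\<omega>. (norm (x - V \<omega> t))\<^sup>2 \<partial>M))
      - \<alpha> t * (\<mu> + \<theta> t) * (1 / 2 * (\<integral>\<omega>. (norm (x - V \<omega> (Suc t)))\<^sup>2 \<partial>M))
      + coef * (\<integral>\<omega>. (SUP k. (norm (sig \<omega> k))\<^sup>2) \<partial>M) + (1 - \<alpha> t) * ((\<gamma> t - gp) * DU)"
    by (rule final_arith[OF m0[unfolded m1] g1 g2 g3])
  have XE: "fst (ansgd \<mu> \<alpha> \<theta> \<eta> (sgrad A U Q om g \<gamma> \<xi> \<omega>) x0 v0 k) = X \<omega> k" for \<omega> k by (simp add: X_def)
  have VE: "snd (ansgd \<mu> \<alpha> \<theta> \<eta> (sgrad A U Q om g \<gamma> \<xi> \<omega>) x0 v0 k) = V \<omega> k" for \<omega> k by (simp add: V_def)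
  show ?thesis unfolding EDelta_def Dsq_def XE VE ELt
    using fin unfolding coef_def FnE gp_def by (simp add: algebra_simps)
qed


end
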